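(* Let $A$ be a finite simple group and $G$ a second countable, totally disconnected, locally compact group. The following are equivalent: (1) $A$ belongs to the local simple content of $G$; (2) there exists a compact open subgroup $U\le G$ such that $A$ is a composition factor of $U$ with infinite multiplicity; (3) for every compact open subgroup $U\le G$, $A$ is a composition factor of $U$ with infinite multiplicity.
   Context: A composition series of a second countable profinite group $U$ is a countable descending chain $U=U_0\triangleright U_1\triangleright\cdots$ of closed subgroups, each normal in the previous one, with trivial intersection and all quotients $U_{i-1}/U_i$ simple (hence finite). Such series exist, and any two have the same composition factors up to isomorphism with the same multiplicities (in $\mathbb{N}\cup\{\infty\}$); a finite simple group is a composition factor of $U$ with multiplicity $n$ if it occurs $n$ times as a quotient in one (equivalently every) composition series. The local simple content of a second countable, totally disconnected, locally compact group $G$ is the set of isomorphism classes of finite simple groups that are composition factors of every compact open subgroup of $G$. *)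

theory Defs
  imports "HOL-Analysis.Analysis" "HOL-Algebra.Algebra"
begin

definition topological_group :: "'a monoid \<Rightarrow> 'a topology \<Rightarrow> bool" where
  "topological_group G T \<longleftrightarrow> group G \<and> topspace T = carrier G
     \<and> continuous_map (prod_topology T T) T (\<lambda>p. fst p \<otimes>\<^bsub>G\<^esub> snd p)
     \<and> continuous_map T T (\<lambda>x. inv\<^bsub>G\<^esub> x)"

definition totally_disconnected_space :: "'a topology \<Rightarrow> bool" where
  "totally_disconnected_space T \<longleftrightarrow>
     (\<forall>x\<in>topspace T. connected_component_of_set T x = {x})"

definition sc_tdlc_group :: "'a monoid \<Rightarrow> 'a topology \<Rightarrow> bool" where
  "sc_tdlc_group G T \<longleftrightarrow> topological_group G T \<and> second_countable T
     \<and> totally_disconnected_space T \<and> locally_compact_space T"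

definition compact_open_subgroup :: "'a monoid \<Rightarrow> 'a topology \<Rightarrow> 'a set \<Rightarrow> bool" where
  "compact_open_subgroup G T U \<longleftrightarrow> subgroup U G \<and> compactin T U \<and> openin T U"

text \<open>Once the chain reaches the trivial group it stays trivial,
  which covers finite composition series (for finite U).\<close>
definition composition_series ::
    "'a monoid \<Rightarrow> 'a topology \<Rightarrow> 'a set \<Rightarrow> (nat \<Rightarrow> 'a set) \<Rightarrow> bool" where
  "composition_series G T U S \<longleftrightarrow>
     S 0 = U
     \<and> (\<forall>i. subgroup (S i) G \<and> closedin T (S i))
     \<and> (\<forall>i. S (Suc i) \<lhd> G\<lparr>carrier := S i\<rparr>)
     \<and> (\<Inter>i. S i) = {\<one>\<^bsub>G\<^esub>}
     \<and> (\<forall>i. S i \<noteq> {\<one>\<^bsub>G\<^esub>} \<longrightarrow> simple_group (G\<lparr>carrier := S i\<rparr> Mod S (Suc i)))"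

definition factor_indices ::
    "'a monoid \<Rightarrow> (nat \<Rightarrow> 'a set) \<Rightarrow> 'b monoid \<Rightarrow> nat set" where
  "factor_indices G S A =
     {i. S i \<noteq> {\<one>\<^bsub>G\<^esub>} \<and> (G\<lparr>carrier := S i\<rparr> Mod S (Suc i)) \<cong> A}"

text \<open>A is a composition factor of U (multiplicity at least one), resp. with infinite
  multiplicity, measured in a composition series (by the Jordan-Hoelder type
  invariance recalled in the paper, this does not depend on the series).\<close>
definition composition_factor ::
    "'a monoid \<Rightarrow> 'a topology \<Rightarrow> 'a set \<Rightarrow> 'b monoid \<Rightarrow> bool" where
  "composition_factor G T U A \<longleftrightarrow>
     (\<exists>S. composition_series G T U S \<and> factor_indices G S A \<noteq> {})"

definition composition_factor_inf_mult ::
    "'a monoid \<Rightarrow> 'a topology \<Rightarrow> 'a set \<Rightarrow> 'b monoid \<Rightarrow> bool" where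
  "composition_factor_inf_mult G T U A \<longleftrightarrow>
     (\<exists>S. composition_series G T U S \<and> infinite (factor_indices G S A))"

definition in_local_simple_content :: "'a monoid \<Rightarrow> 'a topology \<Rightarrow> 'b monoid \<Rightarrow> bool" where
  "in_local_simple_content G T A \<longleftrightarrow>
     (\<forall>U. compact_open_subgroup G T U \<longrightarrow> composition_factor G T U A)"

end

theory Submission
  imports Defs
begin


no_notation (ASCII) subset_mset (infix \<open><#\<close> 50)


lemma td_t1:
  assumes "totally_disconnected_space T"
  shows "t1_space T"
  unfolding t1_space_def
proof (intro ballI impI)
  fix x y assume x: "x \<in> topspace T" and y: "y \<in> topspace T" and xy: "x \<noteq> y"
  show "\<exists>U. openin T U \<and> x \<in> U \<and> y \<notin> U"
  proof (rule ccontr)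
    assume H: "\<not> ?thesis"
    have "connectedin T {x, y}"
      unfolding connectedin
    proof (intro conjI notI)
      show "{x, y} \<subseteq> topspace T" using x y by auto
    next
      assume "\<exists>E1 E2. openin T E1 \<and> openin T E2 \<and> {x, y} \<subseteq> E1 \<union> E2 \<and>
           E1 \<inter> E2 \<inter> {x, y} = {} \<and> E1 \<inter> {x, y} \<noteq> {} \<and> E2 \<inter> {x, y} \<noteq> {}"
      then obtain E1 E2 where E: "openin T E1" "openin T E2" "{x, y} \<subseteq> E1 \<union> E2"
           "E1 \<inter> E2 \<inter> {x, y} = {}" "E1 \<inter> {x, y} \<noteq> {}" "E2 \<inter> {x, y} \<noteq> {}" by blast
      show False
      proof (cases "x \<in> E1")
        case True
        then have "y \<in> E1" using H E(1) by blast
        then show ?thesis using E True by auto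
      next
        case False
        then have "x \<in> E2" using E by auto
        then have "y \<in> E2" using H E(2) by blast
        then show ?thesis using E False by auto
      qed
    qed
    then have "connected_component_of T x y"
      unfolding connected_component_of_def by blast
    then show False using assms x xy unfolding totally_disconnected_space_def by auto
  qed
qed

locale topgrp = group G for G :: "'a monoid" (structure) +
  fixes T :: "'a topology"
  assumes tg: "topological_group G T"
begin

lemma top: "topspace T = carrier G"
  using tg unfolding topological_group_def by auto

lemma cont_mult: "continuous_map (prod_topology T T) T (\<lambda>p. fst p \<otimes> snd p)"
  using tg unfolding topological_group_def by auto

lemma cont_inv: "continuous_map T T (\<lambda>x. inv x)"
  using tg unfolding topological_group_def by auto

lemma cont_mult2:
  assumes "continuous_map Z T f" "continuous_map Z T g"
  shows "continuous_map Z T (\<lambda>x. f x \<otimes> g x)"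
proof -
  have "continuous_map Z T ((\<lambda>p. fst p \<otimes> snd p) \<circ> (\<lambda>x. (f x, g x)))"
    by (intro continuous_map_compose[OF _ cont_mult] continuous_map_pairedI assms)
  then show ?thesis by (simp add: o_def)
qed

lemma cont_lmul: "x \<in> carrier G \<Longrightarrow> continuous_map T T (\<lambda>y. x \<otimes> y)"
  by (intro cont_mult2) (auto simp: top)

lemma cont_rmul: "x \<in> carrier G \<Longrightarrow> continuous_map T T (\<lambda>y. y \<otimes> x)"
  by (intro cont_mult2) (auto simp: top)

lemma homeo_lmul: "x \<in> carrier G \<Longrightarrow> homeomorphic_map T T (\<lambda>y. x \<otimes> y)"
  unfolding homeomorphic_map_maps
  apply (rule exI[of _ "\<lambda>y. inv x \<otimes> y"])
  apply (auto simp: homeomorphic_maps_def cont_lmul top m_assoc[symmetric])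
  done

lemma homeo_rmul: "x \<in> carrier G \<Longrightarrow> homeomorphic_map T T (\<lambda>y. y \<otimes> x)"
  unfolding homeomorphic_map_maps
  apply (rule exI[of _ "\<lambda>y. y \<otimes> inv x"])
  apply (auto simp: homeomorphic_maps_def cont_rmul top m_assoc)
  done

lemma lcos_img: "x <# H = (\<lambda>y. x \<otimes> y) ` H"
  by (auto simp: l_coset_def)

lemma rcos_img: "H #> x = (\<lambda>y. y \<otimes> x) ` H"
  by (auto simp: r_coset_def)

lemma open_lcos: "x \<in> carrier G \<Longrightarrow> openin T H \<Longrightarrow> openin T (x <# H)"
  unfolding lcos_img using homeomorphic_map_openness[OF homeo_lmul, of x H]
  by (metis openin_subset top)

lemma closed_lcos: "x \<in> carrier G \<Longrightarrow> closedin T H \<Longrightarrow> closedin T (x <# H)"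
  unfolding lcos_img using homeomorphic_map_closedness[OF homeo_lmul, of x H]
  by (metis closedin_subset top)

lemma open_rcos: "x \<in> carrier G \<Longrightarrow> openin T H \<Longrightarrow> openin T (H #> x)"
  unfolding rcos_img using homeomorphic_map_openness[OF homeo_rmul, of x H]
  by (metis openin_subset top)

lemma closed_rcos: "x \<in> carrier G \<Longrightarrow> closedin T H \<Longrightarrow> closedin T (H #> x)"
  unfolding rcos_img using homeomorphic_map_closedness[OF homeo_rmul, of x H]
  by (metis closedin_subset top)


end


context topgrp begin

lemma lcos_self': "x \<in> carrier G \<Longrightarrow> subgroup H G \<Longrightarrow> x \<in> x <# H"
  by (auto simp: l_coset_def intro!: bexI[of _ \<one>] subgroup.one_closed)

lemma open_subgroup_closed:
  assumes "subgroup H G" "openin T H"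
  shows "closedin T H"
proof -
  have eq: "topspace T - H = (\<Union>x\<in>carrier G - H. x <# H)"
  proof
    show "topspace T - H \<subseteq> (\<Union>x\<in>carrier G - H. x <# H)"
    proof
      fix y assume y: "y \<in> topspace T - H"
      then have "y \<in> y <# H" using assms(1) top by (intro lcos_self') auto
      then show "y \<in> (\<Union>x\<in>carrier G - H. x <# H)" using y top by auto
    qed
  next
    show "(\<Union>x\<in>carrier G - H. x <# H) \<subseteq> topspace T - H"
    proof
      fix z assume "z \<in> (\<Union>x\<in>carrier G - H. x <# H)"
      then obtain x h where x: "x \<in> carrier G" "x \<notin> H" and h: "h \<in> H" and z: "z = x \<otimes> h"
        by (auto simp: l_coset_def)
      have hc: "h \<in> carrier G" using subgroup.mem_carrier[OF assms(1) h] .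
      have "z \<notin> H"
      proof
        assume "z \<in> H"
        then have "z \<otimes> inv h \<in> H" using h assms(1) by (simp add: subgroup.m_closed subgroup.m_inv_closed)
        moreover have "z \<otimes> inv h = x" using z x hc by (simp add: m_assoc)
        ultimately show False using x by simp
      qed
      moreover have "z \<in> carrier G" using z x hc by simp
      ultimately show "z \<in> topspace T - H" using top by simp
    qed
  qed
  have "openin T (topspace T - H)"
    unfolding eq by (rule openin_Union) (auto intro: open_lcos assms)
  then show ?thesis
    using assms(1) top subgroup.subset unfolding closedin_def by blast
qed

lemma finite_lcosets:
  assumes K: "compactin T K" "subgroup K G" and H: "subgroup H G" "openin T H" "H \<subseteq> K"
  shows "finite ((\<lambda>x. x <# H) ` K)"
proof -
  have Kc: "K \<subseteq> carrier G" using K(2) subgroup.subset by blast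
  have cov: "K \<subseteq> \<Union>((\<lambda>x. x <# H) ` K)"
    using Kc H(1) lcos_self' by blast
  have op: "\<forall>U\<in>(\<lambda>x. x <# H) ` K. openin T U" using Kc H open_lcos by blast
  have "\<exists>F. finite F \<and> F \<subseteq> (\<lambda>x. x <# H) ` K \<and> K \<subseteq> \<Union>F"
    using K(1) cov op unfolding compactin_def by blast
  then obtain F where F: "finite F" "F \<subseteq> (\<lambda>x. x <# H) ` K" "K \<subseteq> \<Union>F"
    by blast
  have "(\<lambda>x. x <# H) ` K \<subseteq> F"
  proof
    fix C assume "C \<in> (\<lambda>x. x <# H) ` K"
    then obtain y where y: "y \<in> K" "C = y <# H" by auto
    then obtain D where D: "D \<in> F" "y \<in> D" using F(3) by blast
    then obtain z where z: "z \<in> K" "D = z <# H" using F(2) by auto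
    have "y <# H = z <# H"
      using D z y Kc H(1) l_repr_independence[of y z H] by auto
    then show "C \<in> F" using y z D by simp
  qed
  then show ?thesis using F(1) finite_subset by blast
qed

lemma nested_compact:
  assumes U: "compactin T U" and S0: "S 0 \<subseteq> U"
    and dec: "\<And>i. S (Suc i) \<subseteq> S i" and cl: "\<And>i. closedin T (S i)"
    and Ob: "openin T Ob" and int: "(\<Inter>i. S i) \<subseteq> Ob"
  shows "\<exists>m. S m \<subseteq> Ob"
proof -
  have decm: "S j \<subseteq> S i" if "i \<le> j" for i j
    using that by (induction rule: dec_induct) (use dec in auto)
  define \<U> where "\<U> = range (\<lambda>i. S i - Ob)"
  have clU: "\<forall>C\<in>\<U>. closedin T C"
    unfolding \<U>_def using cl Ob by auto
  have "U \<inter> \<Inter>\<U> = {}" using int unfolding \<U>_def by blast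
  then have "\<not> (\<forall>F. finite F \<and> F \<subseteq> \<U> \<longrightarrow> U \<inter> \<Inter>F \<noteq> {})"
    using U clU unfolding compactin_fip by blast
  then obtain F where F: "finite F" "F \<subseteq> \<U>" "U \<inter> \<Inter>F = {}"
    by blast
  obtain I where I: "finite I" "F = (\<lambda>i. S i - Ob) ` I"
    using finite_subset_image[OF F(1) F(2)[unfolded \<U>_def]] by blast
  show ?thesis
  proof (cases "I = {}")
    case True
    then have "U = {}" using F I by simp
    then show ?thesis using S0 by blast
  next
    case False
    define m where "m = Max I"
    have "S m - Ob \<subseteq> U \<inter> \<Inter>F"
    proof -
      have "S m \<subseteq> U" using S0 decm[of 0 m] by auto
      moreover have "S m - Ob \<subseteq> S i - Ob" if "i \<in> I" for i
        using decm[of i m] that I(1) m_def by auto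
      ultimately show ?thesis using I by auto
    qed
    then show ?thesis using F(3) by blast
  qed
qed

end


context topgrp begin

lemma hausdorff:
  assumes td: "totally_disconnected_space T"
  shows "Hausdorff_space T"
  unfolding Hausdorff_space_def
proof (intro allI impI)
  fix x y assume A: "x \<in> topspace T \<and> y \<in> topspace T \<and> x \<noteq> y"
  then have x: "x \<in> carrier G" and y: "y \<in> carrier G" and xy: "x \<noteq> y" using top by auto
  define z where "z = inv x \<otimes> y"
  have zc: "z \<in> carrier G" using x y z_def by simp
  have z1: "z \<noteq> \<one>"
  proof
    assume "z = \<one>"
    then have "x \<otimes> z = x" using x by simp
    moreover have "x \<otimes> z = y" using x y z_def by (simp add: m_assoc[symmetric])
    ultimately show False using xy by simp
  qed
  have t1: "\<forall>a\<in>topspace T. \<forall>b\<in>topspace T. a \<noteq> b \<longrightarrow> (\<exists>U. openin T U \<and> a \<in> U \<and> b \<notin> U)"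
    using td_t1[OF td] unfolding t1_space_def .
  have "\<exists>U. openin T U \<and> \<one> \<in> U \<and> z \<notin> U"
    using t1[rule_format, of \<one> z] zc z1 top by auto
  then obtain Ob where Ob: "openin T Ob" "\<one> \<in> Ob" "z \<notin> Ob" by blast
  define f where "f = (\<lambda>p. fst p \<otimes> inv (snd p))"
  have cf: "continuous_map (prod_topology T T) T f"
    unfolding f_def
    by (intro cont_mult2 continuous_map_fst continuous_map_compose[OF continuous_map_snd cont_inv, unfolded o_def])
  define P where "P = {p \<in> topspace (prod_topology T T). f p \<in> Ob}"
  have oP: "openin (prod_topology T T) P"
    unfolding P_def using openin_continuous_map_preimage[OF cf Ob(1)] .
  have "(\<one>, \<one>) \<in> P" unfolding P_def f_def using Ob top by simp
  then obtain U V where UV: "openin T U" "openin T V" "\<one> \<in> U" "\<one> \<in> V" "U \<times> V \<subseteq> P"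
    using oP[unfolded openin_prod_topology_alt, rule_format] by meson
  define W where "W = U \<inter> V"
  have oW: "openin T W" unfolding W_def using UV by auto
  have Wc: "W \<subseteq> carrier G" using openin_subset[OF oW] top by simp
  have W1: "\<one> \<in> W" using UV W_def by simp
  have WP: "a \<otimes> inv b \<in> Ob" if "a \<in> W" "b \<in> W" for a b
    using that UV(5) unfolding W_def P_def f_def by auto
  show "\<exists>U V. openin T U \<and> openin T V \<and> x \<in> U \<and> y \<in> V \<and> disjnt U V"
  proof (intro exI conjI)
    show "openin T (x <# W)" using open_lcos x oW .
    show "openin T (y <# W)" using open_lcos y oW .
    show "x \<in> x <# W" using x W1 unfolding l_coset_def by force
    show "y \<in> y <# W" using y W1 unfolding l_coset_def by force
    show "disjnt (x <# W) (y <# W)"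
      unfolding disjnt_def
    proof (rule ccontr)
      assume "(x <# W) \<inter> (y <# W) \<noteq> {}"
      then obtain a b where ab: "a \<in> W" "b \<in> W" "x \<otimes> a = y \<otimes> b"
        unfolding l_coset_def by blast
      have a: "a \<in> carrier G" and b: "b \<in> carrier G" using ab Wc by auto
      have "a \<otimes> inv b = inv x \<otimes> (x \<otimes> a) \<otimes> inv b"
        using a b x by (simp add: m_assoc[symmetric])
      also have "\<dots> = inv x \<otimes> (y \<otimes> b) \<otimes> inv b" using ab by simp
      also have "\<dots> = z" using y b x z_def by (simp add: m_assoc)
      finally have "z \<in> Ob" using WP ab by metis
      then show False using Ob by simp
    qed
  qed
qed

end


context topgrp begin

lemma compact_open_set_subgroup:
  assumes K: "compactin T K" "openin T K" "\<one> \<in> K"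
  shows "\<exists>U. subgroup U G \<and> compactin T U \<and> openin T U \<and> U \<subseteq> K"
proof -
  have Kc: "K \<subseteq> carrier G" using openin_subset[OF K(2)] top by simp
  define Q where "Q = {p \<in> topspace (prod_topology T T). fst p \<otimes> snd p \<in> K}"
  have oQ: "openin (prod_topology T T) Q"
    unfolding Q_def using openin_continuous_map_preimage[OF cont_mult K(2)] .
  have "\<forall>k\<in>K. \<exists>p. openin T (fst p) \<and> openin T (snd p) \<and> k \<in> fst p \<and> \<one> \<in> snd p \<and> fst p \<times> snd p \<subseteq> Q"
  proof
    fix k assume k: "k \<in> K"
    then have kQ: "(k, \<one>) \<in> Q" unfolding Q_def using Kc top by auto
    have "\<exists>A B. openin T A \<and> openin T B \<and> k \<in> A \<and> \<one> \<in> B \<and> A \<times> B \<subseteq> Q"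
      using oQ[unfolded openin_prod_topology_alt, rule_format, OF kQ] .
    then obtain A B where "openin T A" "openin T B" "k \<in> A" "\<one> \<in> B" "A \<times> B \<subseteq> Q"
      by blast
    then show "\<exists>p. openin T (fst p) \<and> openin T (snd p) \<and> k \<in> fst p \<and> \<one> \<in> snd p \<and> fst p \<times> snd p \<subseteq> Q"
      by (intro exI[of _ "(A, B)"]) (simp only: fst_conv snd_conv)
  qed
  then have "\<exists>f. \<forall>k\<in>K. openin T (fst (f k)) \<and> openin T (snd (f k)) \<and> k \<in> fst (f k) \<and> \<one> \<in> snd (f k) \<and> fst (f k) \<times> snd (f k) \<subseteq> Q"
    by (rule bchoice)
  then obtain f where f: "\<forall>k\<in>K. openin T (fst (f k)) \<and> openin T (snd (f k)) \<and> k \<in> fst (f k) \<and> \<one> \<in> snd (f k) \<and> fst (f k) \<times> snd (f k) \<subseteq> Q"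
    by blast
  define A where "A = (\<lambda>k. fst (f k))"
  define B where "B = (\<lambda>k. snd (f k))"
  have AB: "openin T (A k)" "openin T (B k)" "k \<in> A k" "\<one> \<in> B k" "A k \<times> B k \<subseteq> Q" if "k \<in> K" for k
    using f that unfolding A_def B_def by auto
  have "\<exists>F. finite F \<and> F \<subseteq> A ` K \<and> K \<subseteq> \<Union>F"
    using K(1) AB(1,3) unfolding compactin_def by blast
  then obtain F where F: "finite F" "F \<subseteq> A ` K" "K \<subseteq> \<Union>F" by blast
  obtain K' where K': "K' \<subseteq> K" "finite K'" "F = A ` K'"
    using finite_subset_image[OF F(1) F(2)] by blast
  have K'ne: "K' \<noteq> {}" using F(3) K(3) K' by auto
  define B0 where "B0 = (\<Inter>k\<in>K'. B k)"
  have oB0: "openin T B0" unfolding B0_def using K' K'ne AB(2) by (intro openin_INT2) auto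
  have B01: "\<one> \<in> B0" unfolding B0_def using K' AB(4) by auto
  have B0c: "B0 \<subseteq> carrier G" using openin_subset[OF oB0] top by simp
  have KB: "x \<otimes> b \<in> K" if xK: "x \<in> K" and bB: "b \<in> B0" for x b
  proof -
    obtain k where k: "k \<in> K'" "x \<in> A k" using xK F(3) K'(3) by auto
    have "b \<in> B k" using bB k(1) unfolding B0_def by auto
    then have "(x, b) \<in> Q" using AB(5)[of k] k K'(1) by blast
    then show ?thesis unfolding Q_def by simp
  qed
  define V where "V = {x \<in> topspace T. inv x \<in> B0} \<inter> B0"
  have oV: "openin T V" unfolding V_def
    using openin_continuous_map_preimage[OF cont_inv oB0] oB0 by auto
  have V1: "\<one> \<in> V" unfolding V_def using B01 top by simp
  have Vc: "V \<subseteq> carrier G" using openin_subset[OF oV] top by simp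
  define H where "H = {g \<in> carrier G. \<forall>k\<in>K. k \<otimes> g \<in> K \<and> k \<otimes> inv g \<in> K}"
  have HK: "H \<subseteq> K"
  proof
    fix g assume "g \<in> H"
    then have "\<one> \<otimes> g \<in> K" "g \<in> carrier G" unfolding H_def using K(3) by auto
    then show "g \<in> K" by simp
  qed
  have sH: "subgroup H G"
  proof (rule subgroupI)
    show "H \<subseteq> carrier G" unfolding H_def by auto
    show "H \<noteq> {}"
    proof -
      have "\<one> \<in> H" unfolding H_def using Kc by auto
      then show ?thesis by auto
    qed
  next
    fix g assume "g \<in> H"
    then show "inv g \<in> H" unfolding H_def by auto
  next
    fix g h assume g: "g \<in> H" and h: "h \<in> H"
    have gc: "g \<in> carrier G" and hc: "h \<in> carrier G" using g h unfolding H_def by auto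
    show "g \<otimes> h \<in> H" unfolding H_def
    proof (intro CollectI conjI ballI)
      show "g \<otimes> h \<in> carrier G" using gc hc by simp
      fix k assume k: "k \<in> K"
      have kc: "k \<in> carrier G" using k Kc by auto
      have "k \<otimes> g \<in> K" using g k unfolding H_def by auto
      then have "k \<otimes> g \<otimes> h \<in> K" using h unfolding H_def by auto
      then show "k \<otimes> (g \<otimes> h) \<in> K" using kc gc hc by (simp add: m_assoc)
      have "k \<otimes> inv h \<in> K" using h k unfolding H_def by auto
      then have "k \<otimes> inv h \<otimes> inv g \<in> K" using g unfolding H_def by auto
      then show "k \<otimes> inv (g \<otimes> h) \<in> K" using kc gc hc by (simp add: m_assoc inv_mult_group)
    qed
  qed
  have VH: "V \<subseteq> H"
  proof
    fix v assume v: "v \<in> V"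
    then have vc: "v \<in> carrier G" using Vc by auto
    have "v \<in> B0" "inv v \<in> B0" using v unfolding V_def by auto
    then show "v \<in> H" unfolding H_def using vc KB by auto
  qed
  have oH: "openin T H"
    unfolding openin_subopen[of T H]
  proof
    fix h assume h: "h \<in> H"
    have hc: "h \<in> carrier G" using subgroup.mem_carrier[OF sH h] .
    show "\<exists>S. openin T S \<and> h \<in> S \<and> S \<subseteq> H"
    proof (intro exI conjI)
      show "openin T (h <# V)" using open_lcos[OF hc oV] .
      show "h \<in> h <# V" using V1 hc unfolding l_coset_def by force
      show "h <# V \<subseteq> H"
        unfolding l_coset_def using h VH subgroup.m_closed[OF sH] by blast
    qed
  qed
  have cH: "closedin T H" using open_subgroup_closed[OF sH oH] .
  have kH: "compactin T H" using closed_compactin[OF K(1) HK cH] .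
  show ?thesis using sH kH oH HK by blast
qed

lemma van_dantzig:
  assumes td: "totally_disconnected_space T" and lc: "locally_compact_space T"
    and W: "openin T W" "\<one> \<in> W"
  shows "\<exists>U. subgroup U G \<and> compactin T U \<and> openin T U \<and> U \<subseteq> W"
proof -
  have H: "Hausdorff_space T" using hausdorff[OF td] .
  have one: "\<one> \<in> topspace T" using top by simp
  obtain V0 K0 where VK: "openin T V0" "compactin T K0" "\<one> \<in> V0" "V0 \<subseteq> K0"
    using lc one unfolding locally_compact_space_def by blast
  have comp: "connected_component_of_set T \<one> = {\<one>}"
    using td one unfolding totally_disconnected_space_def by blast
  have C: "{\<one>} \<in> connected_components_of T"
    unfolding connected_components_of_def using comp one by (metis image_eqI)
  obtain U' V' where UV: "openin T U'" "openin T V'" "disjnt U' V'" "U' \<union> V' = topspace T"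
      "{\<one>} \<subseteq> U'" "U' \<subseteq> W \<inter> V0"
    using wilder_locally_compact_component_thm[OF lc H C _ openin_Int[OF W(1) VK(1)]] one W(2) VK(3)
    by auto
  have "topspace T - U' = V'" using UV(3,4) unfolding disjnt_def by blast
  then have cU: "closedin T U'" unfolding closedin_def using UV(2,4) by auto
  have kU: "compactin T U'" using closed_compactin[OF VK(2) _ cU] UV(6) VK(4) by blast
  obtain U where "subgroup U G" "compactin T U" "openin T U" "U \<subseteq> U'"
    using compact_open_set_subgroup[OF kU UV(1)] UV(5) by blast
  then show ?thesis using UV(6) by blast
qed

end


lemma finite_image_factor:
  assumes "finite (f ` A)" and "\<And>x y. x \<in> A \<Longrightarrow> y \<in> A \<Longrightarrow> f x = f y \<Longrightarrow> g x = g y"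
  shows "finite (g ` A)"
proof -
  have "g ` A \<subseteq> (\<lambda>c. g (inv_into A f c)) ` (f ` A)"
  proof
    fix z assume "z \<in> g ` A"
    then obtain x where x: "x \<in> A" "z = g x" by blast
    have "inv_into A f (f x) \<in> A" using x(1) by (simp add: inv_into_into)
    moreover have "f (inv_into A f (f x)) = f x" using x(1) by (simp add: f_inv_into_f)
    ultimately have "g (inv_into A f (f x)) = g x" using assms(2) x(1) by blast
    moreover have "f x \<in> f ` A" using x(1) by blast
    ultimately show "z \<in> (\<lambda>c. g (inv_into A f c)) ` (f ` A)" using x(2)
      by (metis image_eqI)
  qed
  then have "finite (g ` A)"
    using assms(1) finite_subset by blast
  then show ?thesis by simp
qed

context group begin

lemma corr:
  assumes N: "N \<lhd> G" and simp: "simple_group (G Mod N)" and M: "M \<lhd> G" and NM: "N \<subseteq> M"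
  shows "M = N \<or> M = carrier G"
proof -
  interpret N: normal N G by (rule N)
  interpret M: normal M G by (rule M)
  interpret Q: simple_group "G Mod N" by (rule simp)
  have nf: "(rcosets\<^bsub>G\<lparr>carrier := M\<rparr>\<^esub> N) \<lhd> (G Mod N)"
    using normality_factorization[OF N NM M] .
  then have c: "rcosets\<^bsub>G\<lparr>carrier := M\<rparr>\<^esub> N = carrier (G Mod N) \<or> rcosets\<^bsub>G\<lparr>carrier := M\<rparr>\<^esub> N = {\<one>\<^bsub>G Mod N\<^esub>}"
    using Q.no_real_normal_subgroup by blast
  have rc: "rcosets\<^bsub>G\<lparr>carrier := M\<rparr>\<^esub> N = (\<lambda>m. N #> m) ` M"
    unfolding RCOSETS_def r_coset_def by auto
  show ?thesis
  proof (cases "rcosets\<^bsub>G\<lparr>carrier := M\<rparr>\<^esub> N = {\<one>\<^bsub>G Mod N\<^esub>}")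
    case True
    have "M \<subseteq> N"
    proof
      fix m assume m: "m \<in> M"
      then have mc: "m \<in> carrier G" using M.subset by auto
      have "N #> m \<in> rcosets\<^bsub>G\<lparr>carrier := M\<rparr>\<^esub> N" using rc m by auto
      then have "N #> m = N" using True by (simp add: FactGroup_def)
      moreover have "m \<in> N #> m" using rcos_self[OF mc N.subgroup_axioms] .
      ultimately show "m \<in> N" by simp
    qed
    then show ?thesis using NM by auto
  next
    case False
    then have eq: "rcosets\<^bsub>G\<lparr>carrier := M\<rparr>\<^esub> N = carrier (G Mod N)" using c by blast
    have "carrier G \<subseteq> M"
    proof
      fix x assume xc: "x \<in> carrier G"
      then have "N #> x \<in> carrier (G Mod N)" by (auto simp: FactGroup_def RCOSETS_def)
      then have "N #> x \<in> (\<lambda>m. N #> m) ` M" using eq rc by simp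
      then obtain m where m: "m \<in> M" "N #> x = N #> m" by blast
      have "x \<in> N #> m" using m(2) rcos_self[OF xc N.subgroup_axioms] by simp
      then obtain n where n: "n \<in> N" "x = n \<otimes> m" unfolding r_coset_def by auto
      then show "x \<in> M" using NM m(1) M.m_closed by auto
    qed
    then show ?thesis using M.subset by auto
  qed
qed


lemma snd_iso_step:
  assumes Y: "Y \<lhd> G" and simp: "simple_group (G Mod Y)" and K: "K \<lhd> G" and nK: "\<not> K \<subseteq> Y"
  shows "(Y \<inter> K) \<lhd> G\<lparr>carrier := K\<rparr>" and "(G\<lparr>carrier := K\<rparr> Mod (Y \<inter> K)) \<cong> (G Mod Y)"
proof -
  have sK: "subgroup K G" using normal_imp_subgroup[OF K] .
  interpret SI: second_isomorphism_grp Y G K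
    unfolding second_isomorphism_grp_def second_isomorphism_grp_axioms_def using Y sK by auto
  show "(Y \<inter> K) \<lhd> G\<lparr>carrier := K\<rparr>"
    using SI.normal_subgrp_intersection_normal by (simp add: Int_commute)
  have YK: "Y <#> K \<lhd> G" using normal_subgroup_set_mult_closed[OF Y K] .
  have "Y <#> K = Y \<or> Y <#> K = carrier G"
    using corr[OF Y simp YK SI.H_contained_in_set_mult] .
  moreover have "Y <#> K \<noteq> Y" using SI.S_contained_in_set_mult nK by auto
  ultimately have eq: "Y <#> K = carrier G" by simp
  have "(G\<lparr>carrier := K\<rparr> Mod (Y \<inter> K)) \<cong> (G\<lparr>carrier := Y <#> K\<rparr> Mod Y)"
    using is_isoI[OF SI.normal_intersection_quotient_isom] .
  then show "(G\<lparr>carrier := K\<rparr> Mod (Y \<inter> K)) \<cong> (G Mod Y)"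
    unfolding eq by simp
qed


lemma rcosets_eq_image: "rcosets H = (\<lambda>a. H #> a) ` carrier G"
  unfolding RCOSETS_def by auto

lemma max_normal:
  assumes Y: "Y \<lhd> G" and fY: "finite (rcosets Y)" and YG: "Y \<noteq> carrier G"
  shows "\<exists>M. M \<lhd> G \<and> Y \<subseteq> M \<and> M \<noteq> carrier G \<and> simple_group (G Mod M)
           \<and> card (rcosets\<^bsub>G\<lparr>carrier := M\<rparr>\<^esub> Y) < card (rcosets Y)"
proof -
  interpret Y: normal Y G by (rule Y)
  define \<M> where "\<M> = {M. M \<lhd> G \<and> Y \<subseteq> M \<and> M \<noteq> carrier G}"
  have "\<M> \<subseteq> Union ` Pow (rcosets Y)"
  proof
    fix M assume "M \<in> \<M>"
    then have M: "M \<lhd> G" "Y \<subseteq> M" unfolding \<M>_def by auto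
    interpret M: normal M G by (rule M(1))
    have "M = \<Union>((\<lambda>m. Y #> m) ` M)"
    proof
      show "M \<subseteq> \<Union>((\<lambda>m. Y #> m) ` M)"
        using rcos_self[OF _ Y.subgroup_axioms] M.subset by blast
      show "\<Union>((\<lambda>m. Y #> m) ` M) \<subseteq> M"
        using M(2) M.m_closed unfolding r_coset_def by blast
    qed
    moreover have "(\<lambda>m. Y #> m) ` M \<subseteq> rcosets Y"
      unfolding rcosets_eq_image using M.subset by blast
    ultimately show "M \<in> Union ` Pow (rcosets Y)" by blast
  qed
  then have fM: "finite \<M>" using fY by (meson finite_Pow_iff finite_imageI finite_subset)
  have "Y \<in> \<M>" unfolding \<M>_def using Y YG by auto
  then obtain M0 where M0: "M0 \<in> \<M>" "\<forall>b\<in>\<M>. M0 \<subseteq> b \<longrightarrow> M0 = b"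
    using finite_has_maximal[OF fM] by blast
  have M0n: "M0 \<lhd> G" and YM0: "Y \<subseteq> M0" and M0G: "M0 \<noteq> carrier G" using M0(1) unfolding \<M>_def by auto
  interpret M0: normal M0 G by (rule M0n)
  have fM0: "finite (rcosets M0)"
    unfolding rcosets_eq_image
  proof (rule finite_image_factor[where f = "\<lambda>a. Y #> a"])
    show "finite ((\<lambda>a. Y #> a) ` carrier G)" using fY unfolding rcosets_eq_image .
    fix x y assume xy: "x \<in> carrier G" "y \<in> carrier G" "Y #> x = Y #> y"
    have "x \<in> Y #> y" using xy rcos_self[OF xy(1) Y.subgroup_axioms] by simp
    then have "x \<in> M0 #> y" using YM0 unfolding r_coset_def by blast
    then show "M0 #> x = M0 #> y" using repr_independence[OF _ xy(2) M0.subgroup_axioms] by simp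
  qed
  obtain x where x: "x \<in> carrier G" "x \<notin> M0" using M0G M0.subset by blast
  have "M0 #> x \<noteq> M0 #> \<one>"
  proof
    assume "M0 #> x = M0 #> \<one>"
    then have "x \<in> M0 #> \<one>" using rcos_self[OF x(1) M0.subgroup_axioms] by simp
    then show False using x by (simp add: M0.subset coset_mult_one)
  qed
  then have c2: "card {M0 #> x, M0 #> \<one>} = 2" by simp
  have "{M0 #> x, M0 #> \<one>} \<subseteq> rcosets M0"
    unfolding rcosets_eq_image using x by auto
  then have "card (rcosets M0) \<ge> 2" using card_mono[OF fM0] c2 by metis
  then have ord: "order (G Mod M0) > 1" unfolding order_def FactGroup_def by simp
  have simp: "simple_group (G Mod M0)"
    unfolding simple_group_def simple_group_axioms_def
  proof (intro conjI allI impI)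
    show "group (G Mod M0)" using M0.factorgroup_is_group .
    show "1 < order (G Mod M0)" using ord .
    fix N assume N: "N \<lhd> G Mod M0"
    have UN: "\<Union>N \<lhd> G" using M0.factgroup_subgroup_union_normal[OF N] .
    have sN: "subgroup N (G Mod M0)" using normal_imp_subgroup[OF N] .
    have "\<one>\<^bsub>G Mod M0\<^esub> \<in> N" using subgroup.one_closed[OF sN] .
    then have "M0 \<in> N" by (simp add: FactGroup_def)
    then have M0N: "M0 \<subseteq> \<Union>N" by blast
    have Neq: "N = rcosets\<^bsub>G\<lparr>carrier := \<Union>N\<rparr>\<^esub> M0"
      using M0.factgroup_subgroup_union_factor[OF sN] .
    show "N = carrier (G Mod M0) \<or> N = {\<one>\<^bsub>G Mod M0\<^esub>}"
    proof (cases "\<Union>N = carrier G")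
      case True
      then have "N = rcosets M0" using Neq by simp
      then show ?thesis by (simp add: FactGroup_def)
    next
      case False
      then have "\<Union>N \<in> \<M>" unfolding \<M>_def using UN YM0 M0N by auto
      then have eq: "\<Union>N = M0" using M0(2) M0N by blast
      have "rcosets\<^bsub>G\<lparr>carrier := M0\<rparr>\<^esub> M0 = {M0}"
      proof -
        have "rcosets\<^bsub>G\<lparr>carrier := M0\<rparr>\<^esub> M0 = (\<lambda>m. M0 #> m) ` M0"
          unfolding RCOSETS_def r_coset_def by auto
        also have "\<dots> = (\<lambda>m. M0) ` M0"
          using M0.rcos_const[OF is_group] by auto
        also have "\<dots> = {M0}"
        proof -
          have "\<one> \<in> M0" by (rule M0.one_closed)
          then show ?thesis by blast
        qed
        finally show ?thesis .
      qed
      then have "N = {M0}" using Neq eq by simp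
      then show ?thesis by (simp add: FactGroup_def)
    qed
  qed
  have sub: "rcosets\<^bsub>G\<lparr>carrier := M0\<rparr>\<^esub> Y \<subset> rcosets Y"
  proof
    show "rcosets\<^bsub>G\<lparr>carrier := M0\<rparr>\<^esub> Y \<subseteq> rcosets Y"
      unfolding RCOSETS_def r_coset_def using M0.subset by auto
    have "Y #> x \<in> rcosets Y" unfolding rcosets_eq_image using x by auto
    moreover have "Y #> x \<notin> rcosets\<^bsub>G\<lparr>carrier := M0\<rparr>\<^esub> Y"
    proof
      assume "Y #> x \<in> rcosets\<^bsub>G\<lparr>carrier := M0\<rparr>\<^esub> Y"
      then obtain m where m: "m \<in> M0" "Y #> x = Y #> m"
        unfolding RCOSETS_def r_coset_def by auto
      have "x \<in> Y #> m" using m(2) rcos_self[OF x(1) Y.subgroup_axioms] by simp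
      then have "x \<in> M0" using YM0 m(1) M0.m_closed unfolding r_coset_def by blast
      then show False using x by simp
    qed
    ultimately show "rcosets\<^bsub>G\<lparr>carrier := M0\<rparr>\<^esub> Y \<noteq> rcosets Y" by blast
  qed
  have "card (rcosets\<^bsub>G\<lparr>carrier := M0\<rparr>\<^esub> Y) < card (rcosets Y)"
    using psubset_card_mono[OF fY sub] .
  then show ?thesis using M0n YM0 M0G simp by blast
qed

end


definition good_step :: "'a monoid \<Rightarrow> 'a topology \<Rightarrow> 'a set \<Rightarrow> 'a set \<Rightarrow> bool" where
  "good_step G T Xa Y \<longleftrightarrow> subgroup Xa G \<and> closedin T Xa \<and> subgroup Y G \<and> closedin T Y
     \<and> Y \<lhd> G\<lparr>carrier := Xa\<rparr> \<and> (Xa \<noteq> {\<one>\<^bsub>G\<^esub>} \<longrightarrow> simple_group (G\<lparr>carrier := Xa\<rparr> Mod Y))"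

definition fchain :: "'a monoid \<Rightarrow> 'a topology \<Rightarrow> (nat \<Rightarrow> 'a set) \<Rightarrow> nat \<Rightarrow> 'a set \<Rightarrow> 'a set \<Rightarrow> bool" where
  "fchain G T c L Xa Y \<longleftrightarrow> c 0 = Xa \<and> c L = Y \<and> (\<forall>i<L. good_step G T (c i) (c (Suc i)))"

definition Aidx :: "'a monoid \<Rightarrow> (nat \<Rightarrow> 'a set) \<Rightarrow> 'b monoid \<Rightarrow> nat \<Rightarrow> bool" where
  "Aidx G c A j \<longleftrightarrow> c j \<noteq> {\<one>\<^bsub>G\<^esub>} \<and> (G\<lparr>carrier := c j\<rparr> Mod c (Suc j)) \<cong> A"

lemma factor_indices_Aidx: "factor_indices G S A = {j. Aidx G S A j}"
  unfolding factor_indices_def Aidx_def by simp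

lemma cs_iff:
  "composition_series G T U S \<longleftrightarrow> S 0 = U \<and> (\<forall>i. good_step G T (S i) (S (Suc i))) \<and> (\<Inter>i. S i) = {\<one>\<^bsub>G\<^esub>}"
  unfolding composition_series_def good_step_def by blast

lemma prefix_series:
  assumes c: "fchain G T c L Xa Y" and S: "composition_series G T Y S"
  defines "S' \<equiv> (\<lambda>i. if i \<le> L then c i else S (i - L))"
  shows "composition_series G T Xa S'" and "\<And>j. j < L \<Longrightarrow> Aidx G c A j \<Longrightarrow> j \<in> factor_indices G S' A"
proof -
  have c0: "c 0 = Xa" and cL: "c L = Y" and cs: "\<And>i. i < L \<Longrightarrow> good_step G T (c i) (c (Suc i))"
    using c unfolding fchain_def by auto
  have S0: "S 0 = Y" and Ss: "\<And>i. good_step G T (S i) (S (Suc i))" and Si: "(\<Inter>i. S i) = {\<one>\<^bsub>G\<^esub>}"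
    using S unfolding cs_iff by auto
  have shift: "S' (L + i) = S i" for i
    unfolding S'_def using cL S0 by (cases i) auto
  show "composition_series G T Xa S'"
    unfolding cs_iff
  proof (intro conjI allI)
    show "S' 0 = Xa" unfolding S'_def using c0 by simp
    fix i
    show "good_step G T (S' i) (S' (Suc i))"
    proof (cases "i < L")
      case True
      then show ?thesis unfolding S'_def using cs[OF True] by simp
    next
      case False
      then obtain k where k: "i = L + k" by (metis le_iff_add not_less)
      show ?thesis using shift[of k] shift[of "Suc k"] Ss[of k] k by simp
    qed
  next
    show "(\<Inter>i. S' i) = {\<one>\<^bsub>G\<^esub>}"
    proof
      have "(\<Inter>i. S' i) \<subseteq> (\<Inter>i. S' (L + i))" by blast
      also have "\<dots> = (\<Inter>i. S i)" using shift by simp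
      finally show "(\<Inter>i. S' i) \<subseteq> {\<one>\<^bsub>G\<^esub>}" using Si by simp
      have "\<one>\<^bsub>G\<^esub> \<in> S' i" for i
      proof (cases "i < L")
        case True
        then show ?thesis unfolding S'_def using cs[OF True] subgroup.one_closed
          unfolding good_step_def by fastforce
      next
        case False
        then obtain k where k: "i = L + k" by (metis le_iff_add not_less)
        have "\<one>\<^bsub>G\<^esub> \<in> S k" using Ss[of k] subgroup.one_closed unfolding good_step_def by fastforce
        then show ?thesis using shift k by simp
      qed
      then show "{\<one>\<^bsub>G\<^esub>} \<subseteq> (\<Inter>i. S' i)" by blast
    qed
  qed
  fix j assume "j < L" "Aidx G c A j"
  then show "j \<in> factor_indices G S' A"
    unfolding factor_indices_Aidx Aidx_def S'_def by simp
qed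

lemma concat_chain:
  assumes c: "fchain G T c L Xa Y" and d: "fchain G T d M Y Z"
  shows "fchain G T (\<lambda>i. if i \<le> L then c i else d (i - L)) (L + M) Xa Z"
    and "\<And>j. j < M \<Longrightarrow> Aidx G d A j \<Longrightarrow> Aidx G (\<lambda>i. if i \<le> L then c i else d (i - L)) A (L + j)"
proof -
  have c0: "c 0 = Xa" and cL: "c L = Y" and cs: "\<And>i. i < L \<Longrightarrow> good_step G T (c i) (c (Suc i))"
    using c unfolding fchain_def by auto
  have d0: "d 0 = Y" and dM: "d M = Z" and ds: "\<And>i. i < M \<Longrightarrow> good_step G T (d i) (d (Suc i))"
    using d unfolding fchain_def by auto
  define e where "e = (\<lambda>i. if i \<le> L then c i else d (i - L))"
  have shift: "e (L + i) = d i" for i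
    unfolding e_def using cL d0 by (cases i) auto
  show "fchain G T (\<lambda>i. if i \<le> L then c i else d (i - L)) (L + M) Xa Z"
    unfolding fchain_def e_def[symmetric]
  proof (intro conjI allI impI)
    show "e 0 = Xa" unfolding e_def using c0 by simp
    show "e (L + M) = Z" using shift dM by simp
    fix i assume i: "i < L + M"
    show "good_step G T (e i) (e (Suc i))"
    proof (cases "i < L")
      case True
      then show ?thesis unfolding e_def using cs[OF True] by simp
    next
      case False
      then obtain k where k: "i = L + k" by (metis le_iff_add not_less)
      then have "k < M" using i by simp
      then show ?thesis using shift[of k] shift[of "Suc k"] ds[of k] k by simp
    qed
  qed
  fix j assume "j < M" "Aidx G d A j"
  then show "Aidx G (\<lambda>i. if i \<le> L then c i else d (i - L)) A (L + j)"
    unfolding e_def[symmetric] Aidx_def using shift[of j] shift[of "Suc j"] by simp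
qed

lemma inf_concat:
  fixes ch :: "nat \<Rightarrow> nat \<Rightarrow> 'a set" and W :: "nat \<Rightarrow> 'a set"
  assumes ch: "\<And>k. fchain G T (ch k) (len k) (W k) (W (Suc k))" and len: "\<And>k. len k \<ge> 1"
    and int: "(\<Inter>k. W k) \<subseteq> {\<one>\<^bsub>G\<^esub>}"
  shows "\<exists>S. composition_series G T (W 0) S \<and> (\<forall>k j. j \<le> len k \<longrightarrow> S ((\<Sum>i<k. len i) + j) = ch k j)"
proof -
  define pos where "pos k = (\<Sum>i<k. len i)" for k
  have posS: "pos (Suc k) = pos k + len k" for k unfolding pos_def by simp
  have posge: "pos k \<ge> k" for k
  proof (induction k)
    case 0
    then show ?case by simp
  next
    case (Suc k)
    have "1 \<le> len k" by (rule len)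
    then show ?case using Suc.IH posS[of k] by simp
  qed
  have posmono: "pos k \<le> pos k'" if "k \<le> k'" for k k'
    using that by (induction rule: dec_induct) (auto simp: posS)
  define kk where "kk n = (LEAST k. n < pos (Suc k))" for n
  have kk_eq: "kk (pos k + j) = k" if "j < len k" for k j
    unfolding kk_def
  proof (rule Least_equality)
    show "pos k + j < pos (Suc k)" using that posS by simp
    fix y assume "pos k + j < pos (Suc y)"
    then show "k \<le> y"
      using posmono[of "Suc y" k] by (cases "Suc y \<le> k") auto
  qed
  have kk_bounds: "pos (kk n) \<le> n \<and> n < pos (Suc (kk n))" for n
  proof -
    have ex: "n < pos (Suc n)" using posge[of "Suc n"] by simp
    have up: "n < pos (Suc (kk n))" unfolding kk_def using LeastI[of "\<lambda>k. n < pos (Suc k)", OF ex] .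
    have lo: "pos (kk n) \<le> n"
    proof (cases "kk n")
      case 0
      then show ?thesis by (simp add: pos_def)
    next
      case (Suc k')
      have "\<not> n < pos (Suc k')"
        using not_less_Least[of k' "\<lambda>k. n < pos (Suc k)"] Suc unfolding kk_def by simp
      then show ?thesis using Suc by simp
    qed
    show ?thesis using up lo by simp
  qed
  define S where "S n = ch (kk n) (n - pos (kk n))" for n
  have S_lt: "S (pos k + j) = ch k j" if "j < len k" for k j
    unfolding S_def using kk_eq[OF that] by simp
  have ch0: "ch k 0 = W k" and chL: "ch k (len k) = W (Suc k)"
    and chs: "\<And>i. i < len k \<Longrightarrow> good_step G T (ch k i) (ch k (Suc i))" for k
    using ch[of k] unfolding fchain_def by auto
  have S_le: "S (pos k + j) = ch k j" if "j \<le> len k" for k j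
  proof (cases "j < len k")
    case True
    then show ?thesis using S_lt by simp
  next
    case False
    then have j: "j = len k" using that by simp
    have "S (pos k + j) = S (pos (Suc k) + 0)" using j posS by simp
    also have "\<dots> = ch (Suc k) 0" using S_lt[of 0 "Suc k"] len[of "Suc k"] by simp
    also have "\<dots> = ch k j" using ch0 chL j by simp
    finally show ?thesis .
  qed
  have decomp: "\<exists>k j. n = pos k + j \<and> j < len k" for n
    using kk_bounds[of n] posS[of "kk n"] by (intro exI[of _ "kk n"] exI[of _ "n - pos (kk n)"]) auto
  have gs: "good_step G T (S n) (S (Suc n))" for n
  proof -
    obtain k j where kj: "n = pos k + j" "j < len k" using decomp by blast
    have "S n = ch k j" using S_lt kj by simp
    moreover have "S (Suc n) = ch k (Suc j)" using S_le[of "Suc j" k] kj by simp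
    ultimately show ?thesis using chs[OF kj(2)] by simp
  qed
  have cs: "composition_series G T (W 0) S"
    unfolding cs_iff
  proof (intro conjI allI)
    show "S 0 = W 0" using S_le[of 0 0] ch0 by (simp add: pos_def)
    show "good_step G T (S i) (S (Suc i))" for i by (rule gs)
    show "(\<Inter>i. S i) = {\<one>\<^bsub>G\<^esub>}"
    proof
      have "(\<Inter>i. S i) \<subseteq> (\<Inter>k. S (pos k + 0))" by blast
      also have "\<dots> = (\<Inter>k. W k)" using S_le[of 0] ch0 by simp
      finally show "(\<Inter>i. S i) \<subseteq> {\<one>\<^bsub>G\<^esub>}" using int by simp
      have "\<one>\<^bsub>G\<^esub> \<in> S i" for i
        using gs[of i] subgroup.one_closed unfolding good_step_def by fastforce
      then show "{\<one>\<^bsub>G\<^esub>} \<subseteq> (\<Inter>i. S i)" by blast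
    qed
  qed
  show ?thesis using cs S_le unfolding pos_def by blast
qed

lemma inf_concat_A:
  fixes ch :: "nat \<Rightarrow> nat \<Rightarrow> 'a set" and W :: "nat \<Rightarrow> 'a set"
  assumes ch: "\<And>k. fchain G T (ch k) (len k) (W k) (W (Suc k))"
    and A: "\<And>k. \<exists>j<len k. Aidx G (ch k) A j"
    and int: "(\<Inter>k. W k) \<subseteq> {\<one>\<^bsub>G\<^esub>}"
  shows "composition_factor_inf_mult G T (W 0) A"
proof -
  have len: "len k \<ge> 1" for k using A[of k] by auto
  obtain S where S: "composition_series G T (W 0) S"
    and Seq: "\<And>k j. j \<le> len k \<Longrightarrow> S ((\<Sum>i<k. len i) + j) = ch k j"
    using inf_concat[OF ch len int] by blast
  define pos where "pos k = (\<Sum>i<k. len i)" for k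
  have posS: "pos (Suc k) = pos k + len k" for k unfolding pos_def by simp
  obtain jf where jf: "\<And>k. jf k < len k \<and> Aidx G (ch k) A (jf k)"
    using A by metis
  define f where "f k = pos k + jf k" for k
  have inF: "f k \<in> factor_indices G S A" for k
  proof -
    have "S (f k) = ch k (jf k)" using Seq[of "jf k" k] jf[of k] unfolding f_def pos_def by simp
    moreover have "S (Suc (f k)) = ch k (Suc (jf k))"
      using Seq[of "Suc (jf k)" k] jf[of k] unfolding f_def pos_def by simp
    ultimately show ?thesis using jf[of k] unfolding factor_indices_Aidx Aidx_def by simp
  qed
  have "strict_mono f"
  proof (rule strict_monoI_Suc)
    fix k
    have "f k < pos (Suc k)" using jf[of k] posS unfolding f_def by simp
    also have "\<dots> \<le> f (Suc k)" unfolding f_def by simp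
    finally show "f k < f (Suc k)" .
  qed
  then have "infinite (range f)" using range_inj_infinite strict_mono_imp_inj_on by blast
  moreover have "range f \<subseteq> factor_indices G S A" using inF by blast
  ultimately have "infinite (factor_indices G S A)" using finite_subset by blast
  then show ?thesis unfolding composition_factor_inf_mult_def using S by blast
qed


lemma r_coset_sub: "r_coset (G\<lparr>carrier := K\<rparr>) = r_coset G"
  by (intro ext) (simp add: r_coset_def)

lemma l_coset_sub: "l_coset (G\<lparr>carrier := K\<rparr>) = l_coset G"
  by (intro ext) (simp add: l_coset_def)

lemma set_mult_sub: "set_mult (G\<lparr>carrier := K\<rparr>) = set_mult G"
  by (intro ext) (simp add: set_mult_def)

lemma rcosets_sub: "rcosets\<^bsub>G\<lparr>carrier := K\<rparr>\<^esub> H = (\<lambda>x. r_coset G H x) ` K"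
  unfolding RCOSETS_def r_coset_sub by auto

context group begin

lemma inv_cancel_left [simp]: "x \<in> carrier G \<Longrightarrow> h \<in> carrier G \<Longrightarrow> inv x \<otimes> (x \<otimes> h) = h"
  by (simp add: m_assoc[symmetric])

lemma cancel_inv_left [simp]: "x \<in> carrier G \<Longrightarrow> h \<in> carrier G \<Longrightarrow> x \<otimes> (inv x \<otimes> h) = h"
  by (simp add: m_assoc[symmetric])

lemma sub_trans:
  assumes "subgroup H (G\<lparr>carrier := K\<rparr>)" "subgroup K G"
  shows "subgroup H G"
proof -
  have gK: "group (G\<lparr>carrier := K\<rparr>)" using subgroup_imp_group[OF assms(2)] .
  have "group ((G\<lparr>carrier := K\<rparr>)\<lparr>carrier := H\<rparr>)"
    using group.subgroup_imp_group[OF gK assms(1)] .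
  then have "group (G\<lparr>carrier := H\<rparr>)" by simp
  moreover have "H \<subseteq> carrier G"
    using subgroup.subset[OF assms(1)] subgroup.subset[OF assms(2)] by simp
  ultimately show ?thesis using group_incl_imp_subgroup by blast
qed

lemma normal_sub_subset:
  assumes "H \<lhd> G\<lparr>carrier := K\<rparr>"
  shows "H \<subseteq> K"
  using subgroup.subset[OF normal_imp_subgroup[OF assms]] by simp

end

context topgrp begin

lemma finite_rcosets_normal:
  assumes K: "compactin T K" "subgroup K G" and H: "openin T H" "H \<lhd> G\<lparr>carrier := K\<rparr>"
  shows "finite (rcosets\<^bsub>G\<lparr>carrier := K\<rparr>\<^esub> H)"
proof -
  have sH: "subgroup H G" using sub_trans[OF normal_imp_subgroup[OF H(2)] K(2)] .
  have HK: "H \<subseteq> K" using normal_sub_subset[OF H(2)] .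
  have eq: "H #> x = x <# H" if "x \<in> K" for x
    using normal.coset_eq[OF H(2)] that unfolding r_coset_sub l_coset_sub by simp
  have "rcosets\<^bsub>G\<lparr>carrier := K\<rparr>\<^esub> H = (\<lambda>x. x <# H) ` K"
    unfolding rcosets_sub using eq by auto
  then show ?thesis using finite_lcosets[OF K sH H(1) HK] by simp
qed

lemma closed_finite_index_open:
  assumes H: "subgroup H G" "closedin T H" and K: "subgroup K G" "openin T K"
    and HK: "H \<subseteq> K" and fin: "finite ((\<lambda>x. H #> x) ` K)"
  shows "openin T H"
proof -
  have eq: "K - H = \<Union>((\<lambda>x. H #> x) ` (K - H))"
  proof
    show "K - H \<subseteq> \<Union>((\<lambda>x. H #> x) ` (K - H))"
    proof
      fix y assume y: "y \<in> K - H"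
      have "y \<in> carrier G" using y subgroup.subset[OF K(1)] by auto
      then have "y \<in> H #> y" using rcos_self H(1) by blast
      then show "y \<in> \<Union>((\<lambda>x. H #> x) ` (K - H))" using y by blast
    qed
    show "\<Union>((\<lambda>x. H #> x) ` (K - H)) \<subseteq> K - H"
    proof
      fix z assume "z \<in> \<Union>((\<lambda>x. H #> x) ` (K - H))"
      then obtain x h where x: "x \<in> K" "x \<notin> H" and h: "h \<in> H" and z: "z = h \<otimes> x"
        unfolding r_coset_def by blast
      have hc: "h \<in> carrier G" using subgroup.mem_carrier[OF H(1) h] .
      have xc: "x \<in> carrier G" using subgroup.mem_carrier[OF K(1) x(1)] .
      have hK: "h \<in> K" using HK h by blast
      have zK: "z \<in> K" using z subgroup.m_closed[OF K(1) hK x(1)] by simp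
      have "z \<notin> H"
      proof
        assume zH: "z \<in> H"
        have "inv h \<otimes> z \<in> H" using subgroup.m_closed[OF H(1) subgroup.m_inv_closed[OF H(1) h] zH] .
        moreover have "inv h \<otimes> z = x" using z hc xc by (simp add: m_assoc[symmetric])
        ultimately show False using x by simp
      qed
      then show "z \<in> K - H" using zK by simp
    qed
  qed
  have "closedin T (K - H)"
  proof -
    have "finite ((\<lambda>x. H #> x) ` (K - H))" using fin finite_subset by (metis Diff_subset image_mono)
    moreover have "\<forall>C \<in> (\<lambda>x. H #> x) ` (K - H). closedin T C"
      using closed_rcos H(2) subgroup.subset[OF K(1)] by blast
    ultimately show ?thesis by (subst eq) (rule closedin_Union, auto)
  qed
  then have "openin T (K - (K - H))" using openin_diff K(2) by blast
  moreover have "K - (K - H) = H" using HK by blast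
  ultimately show ?thesis by simp
qed


lemma open_union_rcosets:
  assumes Y: "openin T Y" "subgroup Y G" and M: "subgroup M G" "Y \<subseteq> M"
  shows "openin T M"
proof -
  have "M = \<Union>((\<lambda>m. Y #> m) ` M)"
  proof
    show "M \<subseteq> \<Union>((\<lambda>m. Y #> m) ` M)"
    proof
      fix m assume m: "m \<in> M"
      have "m \<in> Y #> m" using rcos_self[OF subgroup.mem_carrier[OF M(1) m] Y(2)] .
      then show "m \<in> \<Union>((\<lambda>m. Y #> m) ` M)" using m by blast
    qed
    show "\<Union>((\<lambda>m. Y #> m) ` M) \<subseteq> M"
    proof
      fix z assume "z \<in> \<Union>((\<lambda>m. Y #> m) ` M)"
      then obtain m y where m: "m \<in> M" and y: "y \<in> Y" and z: "z = y \<otimes> m"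
        unfolding r_coset_def by blast
      have "y \<in> M" using y M(2) by blast
      then show "z \<in> M" using z subgroup.m_closed[OF M(1) _ m] by simp
    qed
  qed
  moreover have "openin T (\<Union>((\<lambda>m. Y #> m) ` M))"
  proof (rule openin_Union)
    fix S assume "S \<in> (\<lambda>m. Y #> m) ` M"
    then obtain m where m: "m \<in> M" "S = Y #> m" by blast
    show "openin T S" using open_rcos[OF subgroup.mem_carrier[OF M(1) m(1)] Y(1)] m(2) by simp
  qed
  ultimately show ?thesis by simp
qed

lemma chain_exists:
  assumes "compactin T Xa" "closedin T Xa" "subgroup Xa G" "openin T Y" "Y \<lhd> G\<lparr>carrier := Xa\<rparr>"
  shows "\<exists>c L. fchain G T c L Xa Y"
proof -
  obtain n where "n = card (rcosets\<^bsub>G\<lparr>carrier := Xa\<rparr>\<^esub> Y)" by blast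
  then show ?thesis using assms
  proof (induction n arbitrary: Xa rule: less_induct)
    case (less n Xa)
    note kX = less.prems(2) and cX = less.prems(3) and sX = less.prems(4) and oY = less.prems(5)
      and nY = less.prems(6)
    have gX: "group (G\<lparr>carrier := Xa\<rparr>)" using subgroup_imp_group[OF sX] .
    have sY: "subgroup Y G" using sub_trans[OF normal_imp_subgroup[OF nY] sX] .
    show ?case
    proof (cases "Y = Xa")
      case True
      have "fchain G T (\<lambda>i. Xa) 0 Xa Y" unfolding fchain_def using True by simp
      then show ?thesis by blast
    next
      case False
      have fin: "finite (rcosets\<^bsub>G\<lparr>carrier := Xa\<rparr>\<^esub> Y)"
        using finite_rcosets_normal[OF kX sX oY nY] .
      obtain M where M: "M \<lhd> G\<lparr>carrier := Xa\<rparr>" "Y \<subseteq> M" "M \<noteq> Xa"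
          "simple_group (G\<lparr>carrier := Xa\<rparr> Mod M)"
          "card (rcosets\<^bsub>G\<lparr>carrier := M\<rparr>\<^esub> Y) < card (rcosets\<^bsub>G\<lparr>carrier := Xa\<rparr>\<^esub> Y)"
        using group.max_normal[OF gX nY fin] False by auto
      have sMX: "subgroup M (G\<lparr>carrier := Xa\<rparr>)" using normal_imp_subgroup[OF M(1)] .
      have sM: "subgroup M G" using sub_trans[OF sMX sX] .
      have MX: "M \<subseteq> Xa" using normal_sub_subset[OF M(1)] .
      have oM: "openin T M" using open_union_rcosets[OF oY sY sM M(2)] .
      have cM: "closedin T M" using open_subgroup_closed[OF sM oM] .
      have kM: "compactin T M" using closed_compactin[OF kX MX cM] .
      have nYM: "Y \<lhd> G\<lparr>carrier := M\<rparr>"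
        using group.normal_restrict_supergroup[OF gX sMX nY M(2)] by simp
      obtain c' L' where c': "fchain G T c' L' M Y"
        using less.IH[OF _ refl kM cM sM oY nYM] M(5) less.prems(1) by blast
      have step: "fchain G T (\<lambda>i. if i = 0 then Xa else M) 1 Xa M"
        unfolding fchain_def good_step_def using sX cX sM cM M(1) M(4) by simp
      show ?thesis using concat_chain(1)[OF step c'] by blast
    qed
  qed
qed


lemma conj_mem:
  assumes x: "x \<in> carrier G" and H: "subgroup H G"
  shows "g \<in> x <# (H #> inv x) \<longleftrightarrow> g \<in> carrier G \<and> inv x \<otimes> g \<otimes> x \<in> H"
proof
  assume "g \<in> x <# (H #> inv x)"
  then obtain h where h: "h \<in> H" "g = x \<otimes> (h \<otimes> inv x)" unfolding l_coset_def r_coset_def by blast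
  have hc: "h \<in> carrier G" using subgroup.mem_carrier[OF H h(1)] .
  have "inv x \<otimes> g \<otimes> x = h" using h(2) x hc by (simp add: m_assoc)
  then show "g \<in> carrier G \<and> inv x \<otimes> g \<otimes> x \<in> H" using h x hc by simp
next
  assume A: "g \<in> carrier G \<and> inv x \<otimes> g \<otimes> x \<in> H"
  define h where "h = inv x \<otimes> g \<otimes> x"
  have "x \<otimes> (h \<otimes> inv x) = g" unfolding h_def using A x by (simp add: m_assoc)
  then show "g \<in> x <# (H #> inv x)" using A unfolding h_def l_coset_def r_coset_def by force
qed

lemma normal_core:
  assumes K: "compactin T Xa" "subgroup Xa G" and H: "subgroup H G" "openin T H" "H \<subseteq> Xa"
  shows "\<exists>N. N \<lhd> G\<lparr>carrier := Xa\<rparr> \<and> openin T N \<and> N \<subseteq> H"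
proof -
  have Xc: "Xa \<subseteq> carrier G" using subgroup.subset[OF K(2)] .
  define cj where "cj x = x <# (H #> inv x)" for x
  have cj_mem: "g \<in> cj x \<longleftrightarrow> g \<in> carrier G \<and> inv x \<otimes> g \<otimes> x \<in> H" if "x \<in> carrier G" for x g
    unfolding cj_def using conj_mem[OF that H(1)] .
  have Hc: "H \<subseteq> carrier G" using subgroup.subset[OF H(1)] .
  have fin: "finite (cj ` Xa)"
  proof (rule finite_image_factor[where f = "\<lambda>x. x <# H"])
    show "finite ((\<lambda>x. x <# H) ` Xa)" using finite_lcosets[OF K H] .
    fix x y assume xy: "x \<in> Xa" "y \<in> Xa" "x <# H = y <# H"
    have xc: "x \<in> carrier G" and yc: "y \<in> carrier G" using xy Xc by auto
    have "y \<in> x <# H" using xy(3) lcos_self'[OF yc H(1)] by simp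
    then obtain h0 where h0: "h0 \<in> H" "y = x \<otimes> h0" unfolding l_coset_def by blast
    have h0c: "h0 \<in> carrier G" using subgroup.mem_carrier[OF H(1) h0(1)] .
    have "g \<in> cj x \<longleftrightarrow> g \<in> cj y" for g
      proof (cases "g \<in> carrier G")
        case False
        then show ?thesis using cj_mem xc yc by auto
      next
        case True
        have eq: "inv y \<otimes> g \<otimes> y = inv h0 \<otimes> (inv x \<otimes> g \<otimes> x) \<otimes> h0"
          using h0(2) True xc h0c by (simp add: m_assoc inv_mult_group)
        have "inv x \<otimes> g \<otimes> x \<in> H \<longleftrightarrow> inv y \<otimes> g \<otimes> y \<in> H"
        proof
          assume "inv x \<otimes> g \<otimes> x \<in> H"
          then show "inv y \<otimes> g \<otimes> y \<in> H" unfolding eq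
            using h0(1) H(1) by (simp add: subgroup.m_closed subgroup.m_inv_closed)
        next
          assume A: "inv y \<otimes> g \<otimes> y \<in> H"
          have "inv x \<otimes> g \<otimes> x = h0 \<otimes> (inv y \<otimes> g \<otimes> y) \<otimes> inv h0"
            unfolding eq using True xc h0c by (simp add: m_assoc)
          then show "inv x \<otimes> g \<otimes> x \<in> H"
            using A h0(1) H(1) by (simp add: subgroup.m_closed subgroup.m_inv_closed)
        qed
        then show ?thesis using cj_mem xc yc True by simp
      qed
    then show "cj x = cj y" by blast
  qed
  define N where "N = \<Inter>(cj ` Xa)"
  have one: "\<one> \<in> Xa" using subgroup.one_closed[OF K(2)] .
  have oN: "openin T N"
    unfolding N_def
  proof (rule openin_Inter[OF fin])
    show "cj ` Xa \<noteq> {}" using one by blast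
    fix S assume "S \<in> cj ` Xa"
    then obtain x where x: "x \<in> Xa" "S = cj x" by blast
    have xc: "x \<in> carrier G" using x Xc by auto
    show "openin T S" unfolding x(2) cj_def using open_lcos[OF xc open_rcos[OF inv_closed[OF xc] H(2)]] .
  qed
  have Nmem: "g \<in> N \<longleftrightarrow> g \<in> carrier G \<and> (\<forall>x\<in>Xa. inv x \<otimes> g \<otimes> x \<in> H)" for g
    unfolding N_def using cj_mem Xc one by blast
  have NH: "N \<subseteq> H"
  proof
    fix g assume "g \<in> N"
    then have "g \<in> carrier G" "inv \<one> \<otimes> g \<otimes> \<one> \<in> H" using Nmem one by auto
    then show "g \<in> H" by simp
  qed
  have sN: "subgroup N G"
  proof (rule subgroupI)
    show "N \<subseteq> carrier G" using Nmem by blast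
    show "N \<noteq> {}"
    proof -
      have "\<one> \<in> N" unfolding Nmem using subgroup.one_closed[OF H(1)] Xc by auto
      then show ?thesis by blast
    qed
  next
    fix g assume g: "g \<in> N"
    then have gc: "g \<in> carrier G" using Nmem by blast
    show "inv g \<in> N" unfolding Nmem
    proof (intro conjI ballI)
      show "inv g \<in> carrier G" using gc by simp
      fix x assume x: "x \<in> Xa"
      have xc: "x \<in> carrier G" using x Xc by auto
      have "inv x \<otimes> g \<otimes> x \<in> H" using g x Nmem by blast
      then have "inv (inv x \<otimes> g \<otimes> x) \<in> H" using H(1) by (simp add: subgroup.m_inv_closed)
      moreover have "inv (inv x \<otimes> g \<otimes> x) = inv x \<otimes> inv g \<otimes> x"
        using xc gc by (simp add: inv_mult_group m_assoc)
      ultimately show "inv x \<otimes> inv g \<otimes> x \<in> H" by simp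
    qed
  next
    fix g h assume g: "g \<in> N" and h: "h \<in> N"
    then have gc: "g \<in> carrier G" and hc: "h \<in> carrier G" using Nmem by auto
    show "g \<otimes> h \<in> N" unfolding Nmem
    proof (intro conjI ballI)
      show "g \<otimes> h \<in> carrier G" using gc hc by simp
      fix x assume x: "x \<in> Xa"
      have xc: "x \<in> carrier G" using x Xc by auto
      have "(inv x \<otimes> g \<otimes> x) \<otimes> (inv x \<otimes> h \<otimes> x) \<in> H"
        using g h x Nmem H(1) by (simp add: subgroup.m_closed)
      moreover have "(inv x \<otimes> g \<otimes> x) \<otimes> (inv x \<otimes> h \<otimes> x) = inv x \<otimes> (g \<otimes> h) \<otimes> x"
        using xc gc hc by (simp add: m_assoc)
      ultimately show "inv x \<otimes> (g \<otimes> h) \<otimes> x \<in> H" by simp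
    qed
  qed
  have NX: "N \<subseteq> Xa" using NH H(3) by blast
  have gX: "group (G\<lparr>carrier := Xa\<rparr>)" using subgroup_imp_group[OF K(2)] .
  have "N \<lhd> G\<lparr>carrier := Xa\<rparr>"
    unfolding group.normal_inv_iff[OF gX]
  proof (intro conjI ballI)
    show "subgroup N (G\<lparr>carrier := Xa\<rparr>)" using subgroup_incl[OF sN K(2) NX] .
    fix y g assume y: "y \<in> carrier (G\<lparr>carrier := Xa\<rparr>)" and g: "g \<in> N"
    have yX: "y \<in> Xa" using y by simp
    have yc: "y \<in> carrier G" using yX Xc by auto
    have gc: "g \<in> carrier G" using g Nmem by blast
    have "y \<otimes> g \<otimes> inv y \<in> N" unfolding Nmem
    proof (intro conjI ballI)
      show "y \<otimes> g \<otimes> inv y \<in> carrier G" using yc gc by simp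
      fix x assume x: "x \<in> Xa"
      have xc: "x \<in> carrier G" using x Xc by auto
      have z: "inv y \<otimes> x \<in> Xa" using subgroup.m_closed[OF K(2) subgroup.m_inv_closed[OF K(2) yX] x] .
      then have "inv (inv y \<otimes> x) \<otimes> g \<otimes> (inv y \<otimes> x) \<in> H" using g Nmem by blast
      moreover have "inv (inv y \<otimes> x) \<otimes> g \<otimes> (inv y \<otimes> x) = inv x \<otimes> (y \<otimes> g \<otimes> inv y) \<otimes> x"
        using xc yc gc by (simp add: inv_mult_group m_assoc)
      ultimately show "inv x \<otimes> (y \<otimes> g \<otimes> inv y) \<otimes> x \<in> H" by simp
    qed
    then show "y \<otimes>\<^bsub>G\<lparr>carrier := Xa\<rparr>\<^esub> g \<otimes>\<^bsub>G\<lparr>carrier := Xa\<rparr>\<^esub> inv\<^bsub>G\<lparr>carrier := Xa\<rparr>\<^esub> y \<in> N"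
      using m_inv_consistent[OF K(2) yX] by simp
  qed
  then show ?thesis using oN NH by blast
qed


lemma series_dec:
  assumes cs: "composition_series G T U S"
  shows "S (Suc i) \<subseteq> S i"
  using cs unfolding cs_iff good_step_def using normal_sub_subset by blast

lemma simple_finite: "simple_group Q \<Longrightarrow> finite (carrier Q)"
  using simple_group.order_gt_one[of Q] unfolding order_def by (metis card.infinite not_less_zero)

lemma series_members:
  assumes cs: "composition_series G T U S" and U: "subgroup U G" "compactin T U" "openin T U"
  shows "subgroup (S i) G \<and> compactin T (S i) \<and> openin T (S i) \<and> closedin T (S i)"
proof (induction i)
  case 0
  have "S 0 = U" using cs unfolding cs_iff by simp
  then show ?case using U open_subgroup_closed[OF U(1) U(3)] by simp
next
  case (Suc i)
  have gs: "good_step G T (S i) (S (Suc i))" using cs unfolding cs_iff by simp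
  then have sS: "subgroup (S (Suc i)) G" and cS: "closedin T (S (Suc i))"
    and nS: "S (Suc i) \<lhd> G\<lparr>carrier := S i\<rparr>"
    unfolding good_step_def by auto
  have sub: "S (Suc i) \<subseteq> S i" using normal_sub_subset[OF nS] .
  have kS: "compactin T (S (Suc i))" using closed_compactin[OF _ sub cS] Suc.IH by blast
  have oS: "openin T (S (Suc i))"
  proof (cases "S i = {\<one>}")
    case True
    have "\<one> \<in> S (Suc i)" using subgroup.one_closed[OF sS] .
    moreover have "S (Suc i) \<subseteq> {\<one>}" using sub True by simp
    ultimately have "S (Suc i) = {\<one>}" by auto
    then have "S (Suc i) = S i" using True by simp
    then show ?thesis using Suc.IH by simp
  next
    case False
    then have "simple_group (G\<lparr>carrier := S i\<rparr> Mod S (Suc i))" using gs unfolding good_step_def by simp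
    then have "finite (carrier (G\<lparr>carrier := S i\<rparr> Mod S (Suc i)))" by (rule simple_finite)
    then have "finite ((\<lambda>x. S (Suc i) #> x) ` S i)"
      unfolding FactGroup_def rcosets_sub by simp
    then show ?thesis
      using closed_finite_index_open[OF sS cS _ _ sub] Suc.IH by blast
  qed
  show ?case using sS kS oS cS by simp
qed

end


lemma iterate_choice:
  assumes step: "\<And>Z k. Q Z \<Longrightarrow> \<exists>c L Y. Q Y \<and> R Z k c L Y" and U: "Q U"
  shows "\<exists>W ch len. W 0 = U \<and> (\<forall>k. Q (W k) \<and> R (W k) k (ch k) (len k) (W (Suc k)))"
proof -
  have "\<forall>p. \<exists>t. Q (fst p) \<longrightarrow> Q (snd (snd t)) \<and> R (fst p) (snd p) (fst t) (fst (snd t)) (snd (snd t))"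
  proof
    fix p
    show "\<exists>t. Q (fst p) \<longrightarrow> Q (snd (snd t)) \<and> R (fst p) (snd p) (fst t) (fst (snd t)) (snd (snd t))"
    proof (cases "Q (fst p)")
      case True
      then obtain c L Y where "Q Y" "R (fst p) (snd p) c L Y" using step by blast
      then show ?thesis by (intro exI[of _ "(c, L, Y)"]) simp
    next
      case False
      then show ?thesis by blast
    qed
  qed
  then obtain f where f: "\<And>p. Q (fst p) \<Longrightarrow> Q (snd (snd (f p))) \<and> R (fst p) (snd p) (fst (f p)) (fst (snd (f p))) (snd (snd (f p)))"
    by metis
  define W where "W k = rec_nat U (\<lambda>k Z. snd (snd (f (Z, k)))) k" for k
  have W0: "W 0 = U" unfolding W_def by simp
  have WS: "W (Suc k) = snd (snd (f (W k, k)))" for k unfolding W_def by simp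
  have QW: "Q (W k)" for k
  proof (induction k)
    case 0 then show ?case using U W0 by simp
  next
    case (Suc k) then show ?case using f[of "(W k, k)"] WS by simp
  qed
  have RW: "R (W k) k (fst (f (W k, k))) (fst (snd (f (W k, k)))) (W (Suc k))" for k
    using f[of "(W k, k)"] QW[of k] unfolding WS by simp
  show ?thesis
    apply (rule exI[of _ W], rule exI[of _ "\<lambda>k. fst (f (W k, k))"], rule exI[of _ "\<lambda>k. fst (snd (f (W k, k)))"])
    using W0 QW RW by simp
qed

locale tdlc = topgrp +
  assumes sc: "sc_tdlc_group G T"
begin

lemma td: "totally_disconnected_space T" using sc unfolding sc_tdlc_group_def by simp
lemma lc: "locally_compact_space T" using sc unfolding sc_tdlc_group_def by simp
lemma sc2: "second_countable T" using sc unfolding sc_tdlc_group_def by simp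
lemma t1: "t1_space T" using td_t1[OF td] .

lemma shrink_seq:
  "\<exists>B. (\<forall>k::nat. openin T (B k) \<and> \<one> \<in> B k) \<and> (\<forall>g\<in>carrier G. g \<noteq> \<one> \<longrightarrow> (\<exists>k. g \<notin> B k))"
proof -
  have "\<exists>\<B>. countable \<B> \<and> (\<forall>V \<in> \<B>. openin T V) \<and>
             (\<forall>U x. openin T U \<and> x \<in> U \<longrightarrow> (\<exists>V \<in> \<B>. x \<in> V \<and> V \<subseteq> U))"
    using sc2 unfolding second_countable_def .
  then obtain \<B> where B0: "countable \<B>" "\<forall>V\<in>\<B>. openin T V"
      "\<forall>U x. openin T U \<and> x \<in> U \<longrightarrow> (\<exists>V \<in> \<B>. x \<in> V \<and> V \<subseteq> U)"
    by blast
  have B: "countable \<B>" "\<forall>V\<in>\<B>. openin T V"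
      "\<And>U x. openin T U \<Longrightarrow> x \<in> U \<Longrightarrow> \<exists>V\<in>\<B>. x \<in> V \<and> V \<subseteq> U"
    using B0 by auto
  define \<B>1 where "\<B>1 = {V\<in>\<B>. \<one> \<in> V}"
  have c1: "countable \<B>1" using B(1) unfolding \<B>1_def by simp
  have "\<one> \<in> topspace T" using top by simp
  then obtain V0 where "V0 \<in> \<B>" "\<one> \<in> V0" using B(3)[OF openin_topspace] by blast
  then have ne: "\<B>1 \<noteq> {}" unfolding \<B>1_def by blast
  define Bs where "Bs = from_nat_into \<B>1"
  have rng: "range Bs = \<B>1" unfolding Bs_def using range_from_nat_into[OF ne c1] .
  have P1: "\<forall>k. openin T (Bs k) \<and> \<one> \<in> Bs k"
  proof
    fix k
    have "Bs k \<in> \<B>1" using rng by blast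
    then show "openin T (Bs k) \<and> \<one> \<in> Bs k" using B(2) unfolding \<B>1_def by auto
  qed
  have P2: "\<forall>g\<in>carrier G. g \<noteq> \<one> \<longrightarrow> (\<exists>k. g \<notin> Bs k)"
  proof (intro ballI impI)
    fix g assume g: "g \<in> carrier G" "g \<noteq> \<one>"
    have "\<exists>U. openin T U \<and> \<one> \<in> U \<and> g \<notin> U"
      using t1[unfolded t1_space_def, rule_format, of \<one> g] g top by auto
    then obtain O1 where O1: "openin T O1" "\<one> \<in> O1" "g \<notin> O1" by blast
    obtain V where V: "V \<in> \<B>" "\<one> \<in> V" "V \<subseteq> O1" using B(3)[OF O1(1) O1(2)] by blast
    then have "V \<in> range Bs" using rng unfolding \<B>1_def by blast
    then obtain k where "V = Bs k" by blast
    then show "\<exists>k. g \<notin> Bs k" using V O1 by blast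
  qed
  show ?thesis by (rule exI[of _ Bs]) (use P1 P2 in blast)
qed

lemma triv_chain:
  assumes "compact_open_subgroup G T Xa" "Xa = {\<one>}"
  shows "fchain G T (\<lambda>i. Xa) 1 Xa Xa"
proof -
  have sX: "subgroup Xa G" and oX: "openin T Xa" using assms(1) unfolding compact_open_subgroup_def by auto
  have cX: "closedin T Xa" using open_subgroup_closed[OF sX oX] .
  have gX: "group (G\<lparr>carrier := Xa\<rparr>)" using subgroup_imp_group[OF sX] .
  have "{\<one>\<^bsub>G\<lparr>carrier := Xa\<rparr>\<^esub>} \<lhd> G\<lparr>carrier := Xa\<rparr>" using group.one_is_normal[OF gX] .
  then have "Xa \<lhd> G\<lparr>carrier := Xa\<rparr>" using assms(2) by simp
  then show ?thesis unfolding fchain_def good_step_def using sX cX assms(2) by simp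
qed

lemma series_exists:
  assumes U: "compact_open_subgroup G T U"
  shows "\<exists>S. composition_series G T U S"
proof -
  obtain B :: "nat \<Rightarrow> 'a set" where B0: "(\<forall>k. openin T (B k) \<and> \<one> \<in> B k) \<and>
    (\<forall>g\<in>carrier G. g \<noteq> \<one> \<longrightarrow> (\<exists>k. g \<notin> B k))" using shrink_seq by (rule exE)
  have B: "\<And>k. openin T (B k)" "\<And>k. \<one> \<in> B k" "\<And>g. g \<in> carrier G \<Longrightarrow> g \<noteq> \<one> \<Longrightarrow> \<exists>k. g \<notin> B k"
    using B0 by simp_all
  have step: "\<exists>c L Y. compact_open_subgroup G T Y \<and> (fchain G T c L Xa Y \<and> L \<ge> 1 \<and> Y \<subseteq> B k)"
    if Z: "compact_open_subgroup G T Xa" for Xa k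
  proof (cases "Xa = {\<one>}")
    case True
    have "fchain G T (\<lambda>i. Xa) 1 Xa Xa" using triv_chain[OF Z True] .
    moreover have "Xa \<subseteq> B k" using True B(2) by simp
    ultimately show ?thesis using Z by blast
  next
    case False
    have sX: "subgroup Xa G" and kX: "compactin T Xa" and oX: "openin T Xa"
      using Z unfolding compact_open_subgroup_def by auto
    have cX: "closedin T Xa" using open_subgroup_closed[OF sX oX] .
    obtain g where g: "g \<in> Xa" "g \<noteq> \<one>" using False subgroup.one_closed[OF sX] by blast
    have gc: "g \<in> carrier G" using subgroup.mem_carrier[OF sX g(1)] .
    have "\<exists>U. openin T U \<and> \<one> \<in> U \<and> g \<notin> U"
      using t1[unfolded t1_space_def, rule_format, of \<one> g] g gc top by auto
    then obtain O1 where O1: "openin T O1" "\<one> \<in> O1" "g \<notin> O1" by blast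
    have oW: "openin T (B k \<inter> O1 \<inter> Xa)" using B(1) O1(1) oX by auto
    have W1: "\<one> \<in> B k \<inter> O1 \<inter> Xa" using B(2) O1(2) subgroup.one_closed[OF sX] by auto
    obtain H where H: "subgroup H G" "compactin T H" "openin T H" "H \<subseteq> B k \<inter> O1 \<inter> Xa"
      using van_dantzig[OF td lc oW W1] by blast
    obtain N where N: "N \<lhd> G\<lparr>carrier := Xa\<rparr>" "openin T N" "N \<subseteq> H"
      using normal_core[OF kX sX H(1) H(3)] H(4) by blast
    have sN: "subgroup N G" using sub_trans[OF normal_imp_subgroup[OF N(1)] sX] .
    have cN: "closedin T N" using open_subgroup_closed[OF sN N(2)] .
    have kN: "compactin T N" using closed_compactin[OF kX _ cN] N(3) H(4) by blast
    obtain c L where c: "fchain G T c L Xa N" using chain_exists[OF kX cX sX N(2) N(1)] by blast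
    have "N \<noteq> Xa" using g N(3) H(4) O1(3) by blast
    then have "L \<ge> 1" using c unfolding fchain_def by (cases L) auto
    moreover have "compact_open_subgroup G T N" unfolding compact_open_subgroup_def using sN kN N(2) by simp
    moreover have "N \<subseteq> B k" using N(3) H(4) by blast
    ultimately show ?thesis using c by blast
  qed
  obtain W ch len where W: "W 0 = U"
    and Wk: "\<And>k. compact_open_subgroup G T (W k) \<and> (fchain G T (ch k) (len k) (W k) (W (Suc k)) \<and> len k \<ge> 1 \<and> W (Suc k) \<subseteq> B k)"
    using iterate_choice[where Q = "compact_open_subgroup G T"
        and R = "\<lambda>Z k c L Y. fchain G T c L Z Y \<and> L \<ge> 1 \<and> Y \<subseteq> B k", OF step U] by blast
  have int: "(\<Inter>k. W k) \<subseteq> {\<one>}"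
  proof
    fix g assume g: "g \<in> (\<Inter>k. W k)"
    have "g \<in> carrier G" using g Wk[of 0] unfolding compact_open_subgroup_def
      using subgroup.subset by blast
    show "g \<in> {\<one>}"
    proof (rule ccontr)
      assume "g \<notin> {\<one>}"
      then obtain k where "g \<notin> B k" using B(3) \<open>g \<in> carrier G\<close> by blast
      moreover have "g \<in> W (Suc k)" using g by blast
      ultimately show False using Wk[of k] by blast
    qed
  qed
  obtain S where "composition_series G T (W 0) S"
    using inf_concat[where ch = ch and len = len and W = W] Wk int by blast
  then show ?thesis using W by blast
qed


lemma series_decm:
  assumes cs: "composition_series G T U S" and "i \<le> j"
  shows "S j \<subseteq> S i"
  using assms(2) by (induction rule: dec_induct) (use series_dec[OF cs] in blast)+

lemma local_to_inf:
  assumes loc: "in_local_simple_content G T A" and U: "compact_open_subgroup G T U"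
  shows "composition_factor_inf_mult G T U A"
proof -
  obtain B :: "nat \<Rightarrow> 'a set" where B0: "(\<forall>k. openin T (B k) \<and> \<one> \<in> B k) \<and>
    (\<forall>g\<in>carrier G. g \<noteq> \<one> \<longrightarrow> (\<exists>k. g \<notin> B k))" using shrink_seq by (rule exE)
  have B: "\<And>k. openin T (B k)" "\<And>k. \<one> \<in> B k" "\<And>g. g \<in> carrier G \<Longrightarrow> g \<noteq> \<one> \<Longrightarrow> \<exists>k. g \<notin> B k"
    using B0 by simp_all
  have step: "\<exists>c L Y. compact_open_subgroup G T Y \<and> (fchain G T c L Xa Y \<and> (\<exists>j<L. Aidx G c A j) \<and> Y \<subseteq> B k)"
    if Z: "compact_open_subgroup G T Xa" for Xa k
  proof -
    have sX: "subgroup Xa G" and kX: "compactin T Xa" and oX: "openin T Xa"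
      using Z unfolding compact_open_subgroup_def by auto
    obtain R where R: "composition_series G T Xa R" "factor_indices G R A \<noteq> {}"
      using loc Z unfolding in_local_simple_content_def composition_factor_def by blast
    obtain j where j: "j \<in> factor_indices G R A" using R(2) by blast
    have mem: "subgroup (R i) G \<and> compactin T (R i) \<and> openin T (R i) \<and> closedin T (R i)" for i
      using series_members[OF R(1) sX kX oX] .
    have R0: "R 0 = Xa" using R(1) unfolding cs_iff by simp
    have Rint: "(\<Inter>i. R i) \<subseteq> B k" using R(1) B(2) unfolding cs_iff by simp
    obtain m0 where m0: "R m0 \<subseteq> B k"
      using nested_compact[OF kX _ series_dec[OF R(1)] _ B(1) Rint] R0 mem by blast
    define m where "m = max m0 (Suc j)"
    have Rm: "R m \<subseteq> B k" using series_decm[OF R(1), of m0 m] m0 unfolding m_def by simp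
    have fc: "fchain G T R m Xa (R m)" unfolding fchain_def using R0 R(1) unfolding cs_iff by simp
    have "j < m" unfolding m_def by simp
    moreover have "Aidx G R A j" using j unfolding factor_indices_Aidx by simp
    moreover have "compact_open_subgroup G T (R m)" unfolding compact_open_subgroup_def using mem by simp
    ultimately show ?thesis using fc Rm by blast
  qed
  obtain W ch len where W: "W 0 = U"
    and Wk: "\<And>k. compact_open_subgroup G T (W k) \<and> (fchain G T (ch k) (len k) (W k) (W (Suc k)) \<and> (\<exists>j<len k. Aidx G (ch k) A j) \<and> W (Suc k) \<subseteq> B k)"
    using iterate_choice[where Q = "compact_open_subgroup G T"
        and R = "\<lambda>Z k c L Y. fchain G T c L Z Y \<and> (\<exists>j<L. Aidx G c A j) \<and> Y \<subseteq> B k", OF step U] by blast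
  have int: "(\<Inter>k. W k) \<subseteq> {\<one>}"
  proof
    fix g assume g: "g \<in> (\<Inter>k. W k)"
    have "g \<in> carrier G" using g Wk[of 0] unfolding compact_open_subgroup_def
      using subgroup.subset by blast
    show "g \<in> {\<one>}"
    proof (rule ccontr)
      assume "g \<notin> {\<one>}"
      then obtain k where "g \<notin> B k" using B(3) \<open>g \<in> carrier G\<close> by blast
      moreover have "g \<in> W (Suc k)" using g by blast
      ultimately show False using Wk[of k] by blast
    qed
  qed
  have "composition_factor_inf_mult G T (W 0) A"
    using inf_concat_A[where ch = ch and len = len and W = W] Wk int by blast
  then show ?thesis using W by simp
qed

end


context tdlc begin

lemma inf_to_local:
  assumes U: "compact_open_subgroup G T U" and inf: "composition_factor_inf_mult G T U A"
    and V: "compact_open_subgroup G T V"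
  shows "composition_factor G T V A"
proof -
  obtain S where cs: "composition_series G T U S" and infS: "infinite (factor_indices G S A)"
    using inf unfolding composition_factor_inf_mult_def by blast
  have sU: "subgroup U G" and kU: "compactin T U" and oU: "openin T U"
    using U unfolding compact_open_subgroup_def by auto
  have sV: "subgroup V G" and kV: "compactin T V" and oV: "openin T V"
    using V unfolding compact_open_subgroup_def by auto
  have cV: "closedin T V" using open_subgroup_closed[OF sV oV] .
  have mem: "subgroup (S i) G \<and> compactin T (S i) \<and> openin T (S i) \<and> closedin T (S i)" for i
    using series_members[OF cs sU kU oU] .
  have gs: "good_step G T (S i) (S (Suc i))" for i using cs unfolding cs_iff by simp
  have S0: "S 0 = U" using cs unfolding cs_iff by simp
  have Sint: "(\<Inter>i. S i) \<subseteq> U \<inter> V"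
    using cs subgroup.one_closed[OF sU] subgroup.one_closed[OF sV] unfolding cs_iff by simp
  obtain N where N: "S N \<subseteq> U \<inter> V"
    using nested_compact[OF kU _ series_dec[OF cs] _ openin_Int[OF oU oV] Sint] S0 mem by blast
  have SNV: "S N \<subseteq> V" using N by blast
  obtain K where K: "K \<lhd> G\<lparr>carrier := V\<rparr>" "openin T K" "K \<subseteq> S N"
    using normal_core[OF kV sV _ _ SNV] mem by blast
  have sK: "subgroup K G" using sub_trans[OF normal_imp_subgroup[OF K(1)] sV] .
  have cK: "closedin T K" using open_subgroup_closed[OF sK K(2)] .
  have KV: "K \<subseteq> V" using K(3) SNV by blast
  have kK: "compactin T K" using closed_compactin[OF kV KV cK] .
  have SiV: "S i \<subseteq> V" if "N \<le> i" for i using series_decm[OF cs that] SNV by blast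
  define I where "I = {i. N \<le> i \<and> S i \<noteq> S (Suc i) \<and> S i \<inter> K \<subseteq> S (Suc i)}"
  define f where "f i = S i <#> K" for i
  define Lc where "Lc = (\<lambda>x. x <# K) ` V"
  have fLc: "finite Lc" unfolding Lc_def using finite_lcosets[OF kV sV sK K(2) KV] .
  have fI_sub: "f ` I \<subseteq> Union ` Pow Lc"
  proof
    fix Z assume "Z \<in> f ` I"
    then obtain i where i: "i \<in> I" "Z = f i" by blast
    have "f i = \<Union>((\<lambda>s. s <# K) ` S i)"
      unfolding f_def set_mult_def l_coset_def by blast
    moreover have "(\<lambda>s. s <# K) ` S i \<subseteq> Lc" unfolding Lc_def using SiV i(1) unfolding I_def by blast
    ultimately show "Z \<in> Union ` Pow Lc" using i(2) by blast
  qed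
  have finfI: "finite (f ` I)"
    using finite_subset[OF fI_sub] fLc by simp
  have neq: "f i \<noteq> f j" if ij: "i \<in> I" "j \<in> I" "i < j" for i j
  proof -
    have sub: "S (Suc i) \<subseteq> S i" using series_dec[OF cs] .
    have neqi: "S i \<noteq> S (Suc i)" and lost: "S i \<inter> K \<subseteq> S (Suc i)" using ij(1) unfolding I_def by auto
    obtain x where x: "x \<in> S i" "x \<notin> S (Suc i)" using sub neqi by blast
    have xc: "x \<in> carrier G" using subgroup.mem_carrier[OF conjunct1[OF mem[of i]] x(1)] .
    have "x \<otimes> \<one> \<in> S i <#> K"
      unfolding set_mult_def using x(1) subgroup.one_closed[OF sK] by blast
    then have xf: "x \<in> f i" unfolding f_def using xc by simp
    have "f j \<subseteq> f (Suc i)"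
      unfolding f_def using series_decm[OF cs, of "Suc i" j] ij(3) by (intro mono_set_mult) auto
    moreover have "x \<notin> f (Suc i)"
    proof
      assume "x \<in> f (Suc i)"
      then obtain s k where s: "s \<in> S (Suc i)" and k: "k \<in> K" and xe: "x = s \<otimes> k"
        unfolding f_def set_mult_def by blast
      have sSi: "s \<in> S i" using s sub by blast
      have sc: "s \<in> carrier G" using subgroup.mem_carrier[OF conjunct1[OF mem[of i]] sSi] .
      have kc: "k \<in> carrier G" using subgroup.mem_carrier[OF sK k] .
      have "inv s \<otimes> x = k" using xe sc kc by simp
      moreover have "inv s \<otimes> x \<in> S i"
        using subgroup.m_closed[OF conjunct1[OF mem[of i]] subgroup.m_inv_closed[OF conjunct1[OF mem[of i]] sSi] x(1)] .
      ultimately have "k \<in> S (Suc i)" using k lost by auto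
      then have "s \<otimes> k \<in> S (Suc i)" using subgroup.m_closed[OF conjunct1[OF mem[of "Suc i"]] s] by blast
      then show False using xe x(2) by simp
    qed
    ultimately show ?thesis using xf by blast
  qed
  have "inj_on f I"
  proof (rule inj_onI)
    fix i j assume "i \<in> I" "j \<in> I" "f i = f j"
    then show "i = j" using neq[of i j] neq[of j i] by (metis linorder_neqE_nat)
  qed
  then have finI: "finite I" using finite_imageD finfI by blast
  have "infinite (factor_indices G S A - ({..<N} \<union> I))"
    using Diff_infinite_finite[OF _ infS] finI by simp
  then have "factor_indices G S A - ({..<N} \<union> I) \<noteq> {}" by (metis finite.emptyI)
  then obtain i where i0: "i \<in> factor_indices G S A - ({..<N} \<union> I)" by blast
  then have i: "i \<in> factor_indices G S A" "N \<le> i" "i \<notin> I" by auto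
  have Ai: "Aidx G S A i" using i(1) unfolding factor_indices_Aidx by simp
  then have Si1: "S i \<noteq> {\<one>}" and isoA: "(G\<lparr>carrier := S i\<rparr> Mod S (Suc i)) \<cong> A"
    unfolding Aidx_def by auto
  have nSi: "S (Suc i) \<lhd> G\<lparr>carrier := S i\<rparr>" using gs[of i] unfolding good_step_def by simp
  have simpi: "simple_group (G\<lparr>carrier := S i\<rparr> Mod S (Suc i))" using gs[of i] Si1 unfolding good_step_def by simp
  have sSi: "subgroup (S i) G" using mem by simp
  have gSi: "group (G\<lparr>carrier := S i\<rparr>)" using subgroup_imp_group[OF sSi] .
  have "S i \<noteq> S (Suc i)"
  proof
    assume eq: "S i = S (Suc i)"
    have "\<not> simple_group (G\<lparr>carrier := S i\<rparr> Mod carrier (G\<lparr>carrier := S i\<rparr>))"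
      using group.self_factor_not_simple[OF gSi] .
    then show False using simpi eq by simp
  qed
  then have notsub: "\<not> (S i \<inter> K \<subseteq> S (Suc i))" using i(2,3) unfolding I_def by blast
  define K' where "K' = S i \<inter> K"
  define K2 where "K2 = S (Suc i) \<inter> K"
  have gV: "group (G\<lparr>carrier := V\<rparr>)" using subgroup_imp_group[OF sV] .
  have sSiV: "subgroup (S i) (G\<lparr>carrier := V\<rparr>)" using subgroup_incl[OF sSi sV SiV[OF i(2)]] .
  have nK': "K' \<lhd> G\<lparr>carrier := S i\<rparr>"
    using group.normal_Int_subgroup[OF gV sSiV K(1)] unfolding K'_def by (simp add: Int_commute)
  have SI: "(S (Suc i) \<inter> K') \<lhd> (G\<lparr>carrier := S i\<rparr>)\<lparr>carrier := K'\<rparr>"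
    "((G\<lparr>carrier := S i\<rparr>)\<lparr>carrier := K'\<rparr> Mod (S (Suc i) \<inter> K')) \<cong> (G\<lparr>carrier := S i\<rparr> Mod S (Suc i))"
    using group.snd_iso_step[OF gSi nSi simpi nK'] notsub unfolding K'_def by auto
  have K2eq: "S (Suc i) \<inter> K' = K2"
    unfolding K'_def K2_def using series_dec[OF cs, of i] by blast
  have nK2: "K2 \<lhd> G\<lparr>carrier := K'\<rparr>" using SI(1) K2eq by simp
  have isoK: "(G\<lparr>carrier := K'\<rparr> Mod K2) \<cong> (G\<lparr>carrier := S i\<rparr> Mod S (Suc i))" using SI(2) K2eq by simp
  have gQ: "group (G\<lparr>carrier := K'\<rparr> Mod K2)" using normal.factorgroup_is_group[OF nK2] .
  have iso2: "(G\<lparr>carrier := S i\<rparr> Mod S (Suc i)) \<cong> (G\<lparr>carrier := K'\<rparr> Mod K2)"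
    using group.iso_sym[OF gQ isoK] .
  have simpK: "simple_group (G\<lparr>carrier := K'\<rparr> Mod K2)"
    using iso2 simple_group.iso_simple[OF simpi gQ] unfolding is_iso_def by blast
  have isoKA: "(G\<lparr>carrier := K'\<rparr> Mod K2) \<cong> A" using iso_trans[OF isoK isoA] .
  have K'1: "K' \<noteq> {\<one>}"
  proof
    assume e: "K' = {\<one>}"
    have "\<one> \<in> S (Suc i)" using subgroup.one_closed[OF conjunct1[OF mem[of "Suc i"]]] .
    then have "S i \<inter> K \<subseteq> S (Suc i)" using e unfolding K'_def by simp
    then show False using notsub by simp
  qed
  have sK': "subgroup K' G" unfolding K'_def using subgroups_Inter_pair[OF sSi sK] .
  have sK2: "subgroup K2 G" unfolding K2_def using subgroups_Inter_pair[OF conjunct1[OF mem[of "Suc i"]] sK] .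
  have cK': "closedin T K'" unfolding K'_def using mem cK by auto
  have cK2: "closedin T K2" unfolding K2_def using mem cK by auto
  have oK2: "openin T K2" unfolding K2_def using mem K(2) by auto
  have kK2: "compactin T K2" using closed_compactin[OF kK _ cK2] unfolding K2_def by blast
  have c3: "fchain G T (\<lambda>j. if j = 0 then K' else K2) 1 K' K2"
    unfolding fchain_def good_step_def using sK' cK' sK2 cK2 nK2 simpK by simp
  have A3: "Aidx G (\<lambda>j. if j = 0 then K' else K2) A 0"
    unfolding Aidx_def using K'1 isoKA by simp
  obtain c1 L1 where c1: "fchain G T c1 L1 V K" using chain_exists[OF kV cV sV K(2) K(1)] by blast
  have c2ex: "\<forall>d. N + d \<le> i \<longrightarrow> (\<exists>c L. fchain G T c L K (S (N + d) \<inter> K))"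
  proof
    fix d
    show "N + d \<le> i \<longrightarrow> (\<exists>c L. fchain G T c L K (S (N + d) \<inter> K))"
    proof (induction d)
      case 0
      have "S N \<inter> K = K" using K(3) by blast
      then have "fchain G T (\<lambda>j. K) 0 K (S (N + 0) \<inter> K)" unfolding fchain_def by simp
      then show ?case by blast
    next
      case (Suc d)
      show ?case
      proof
        assume le: "N + Suc d \<le> i"
        then obtain c L where c: "fchain G T c L K (S (N + d) \<inter> K)" using Suc.IH by auto
        define j where "j = N + d"
        have sj: "subgroup (S j) G" using mem by simp
        have sXj: "subgroup (S j \<inter> K) G" using subgroups_Inter_pair[OF sj sK] .
        have cXj: "closedin T (S j \<inter> K)" using mem cK by auto
        have kXj: "compactin T (S j \<inter> K)" using closed_compactin[OF kK _ cXj] by blast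
        have oYj: "openin T (S (Suc j) \<inter> K)" using mem K(2) by auto
        have gj: "group (G\<lparr>carrier := S j\<rparr>)" using subgroup_imp_group[OF sj] .
        have nj: "S (Suc j) \<lhd> G\<lparr>carrier := S j\<rparr>" using gs[of j] unfolding good_step_def by simp
        have sXjj: "subgroup (S j \<inter> K) (G\<lparr>carrier := S j\<rparr>)" using subgroup_incl[OF sXj sj] by blast
        have "(S (Suc j) \<inter> (S j \<inter> K)) \<lhd> (G\<lparr>carrier := S j\<rparr>)\<lparr>carrier := S j \<inter> K\<rparr>"
          using group.normal_Int_subgroup[OF gj sXjj nj] .
        moreover have "S (Suc j) \<inter> (S j \<inter> K) = S (Suc j) \<inter> K" using series_dec[OF cs, of j] by blast
        ultimately have nYj: "(S (Suc j) \<inter> K) \<lhd> G\<lparr>carrier := S j \<inter> K\<rparr>" by simp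
        obtain c' L' where c': "fchain G T c' L' (S j \<inter> K) (S (Suc j) \<inter> K)"
          using chain_exists[OF kXj cXj sXj oYj nYj] by blast
        have "fchain G T (\<lambda>k. if k \<le> L then c k else c' (k - L)) (L + L') K (S (Suc j) \<inter> K)"
          using concat_chain(1)[OF c c'[unfolded j_def]] unfolding j_def .
        then show "\<exists>c L. fchain G T c L K (S (N + Suc d) \<inter> K)" unfolding j_def by auto
      qed
    qed
  qed
  obtain c2 L2 where c2: "fchain G T c2 L2 K K'"
    using c2ex[rule_format, of "i - N"] i(2) unfolding K'_def by auto
  have c12: "fchain G T (\<lambda>k. if k \<le> L1 then c1 k else c2 (k - L1)) (L1 + L2) V K'"
    using concat_chain(1)[OF c1 c2] .
  define c12f where "c12f = (\<lambda>k. if k \<le> L1 then c1 k else c2 (k - L1))"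
  define c3f where "c3f = (\<lambda>j::nat. if j = 0 then K' else K2)"
  have c123: "fchain G T (\<lambda>k. if k \<le> L1 + L2 then c12f k else c3f (k - (L1 + L2))) (L1 + L2 + 1) V K2"
    using concat_chain(1)[OF c12[folded c12f_def] c3[folded c3f_def]] .
  have A123: "Aidx G (\<lambda>k. if k \<le> L1 + L2 then c12f k else c3f (k - (L1 + L2))) A (L1 + L2 + 0)"
    using concat_chain(2)[OF c12[folded c12f_def] c3[folded c3f_def], of 0 A] A3[folded c3f_def] by simp
  have "compact_open_subgroup G T K2" unfolding compact_open_subgroup_def using sK2 kK2 oK2 by simp
  then obtain S2 where S2: "composition_series G T K2 S2" using series_exists by blast
  define S' where "S' = (\<lambda>k. if k \<le> L1 + L2 + 1 then (\<lambda>k. if k \<le> L1 + L2 then c12f k else c3f (k - (L1 + L2))) k else S2 (k - (L1 + L2 + 1)))"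
  have "composition_series G T V S'" unfolding S'_def using prefix_series(1)[OF c123 S2] .
  moreover have "L1 + L2 \<in> factor_indices G S' A"
    unfolding S'_def using prefix_series(2)[OF c123 S2, of "L1 + L2" A] A123 by simp
  ultimately show ?thesis unfolding composition_factor_def by blast
qed

end


theorem lemma5p4:
  fixes G :: "'a monoid" and T :: "'a topology" and A :: "'b monoid"
  assumes "sc_tdlc_group G T"
    and "simple_group A" and "finite (carrier A)"
  shows "(in_local_simple_content G T A
            \<longleftrightarrow> (\<exists>U. compact_open_subgroup G T U \<and> composition_factor_inf_mult G T U A))
       \<and> ((\<exists>U. compact_open_subgroup G T U \<and> composition_factor_inf_mult G T U A)
            \<longleftrightarrow> (\<forall>U. compact_open_subgroup G T U \<longrightarrow> composition_factor_inf_mult G T U A))"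
proof -
  have tg: "topological_group G T" using assms(1) unfolding sc_tdlc_group_def by simp
  have gG: "group G" using tg unfolding topological_group_def by simp
  interpret tdlc G T
    unfolding tdlc_def topgrp_def topgrp_axioms_def tdlc_axioms_def using gG tg assms(1) by simp
  have "\<one>\<^bsub>G\<^esub> \<in> topspace T" using top by simp
  then obtain U0 where "subgroup U0 G" "compactin T U0" "openin T U0"
    using van_dantzig[OF td lc openin_topspace] by blast
  then have exU: "compact_open_subgroup G T U0" unfolding compact_open_subgroup_def by simp
  have i13: "\<forall>U. compact_open_subgroup G T U \<longrightarrow> composition_factor_inf_mult G T U A"
    if "in_local_simple_content G T A" using local_to_inf[OF that] by blast
  have i21: "in_local_simple_content G T A"
    if "\<exists>U. compact_open_subgroup G T U \<and> composition_factor_inf_mult G T U A"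
    using that inf_to_local unfolding in_local_simple_content_def by blast
  have i32: "\<exists>U. compact_open_subgroup G T U \<and> composition_factor_inf_mult G T U A"
    if "\<forall>U. compact_open_subgroup G T U \<longrightarrow> composition_factor_inf_mult G T U A"
    using that exU by blast
  show ?thesis using i13 i21 i32 by blast
qed


end
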